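(* There is no injective frame $\mathcal{X}=\{x_k\}_{k=1}^\infty$ for the real or complex space $\ell_2$ such that for every real sequence $a=\{a_k\}_{k=1}^\infty\in\ell_2$ there is a Hilbert–Schmidt operator $T$ on $\ell_2$ with $\langle Tx_k,x_k\rangle=a_k$ for all $k=1,2,\dots$.
   Context: A family $\{x_k\}$ in $\ell_2$ is called injective if whenever a Hilbert–Schmidt self-adjoint operator $T$ on $\ell_2$ satisfies $\langle Tx_k,x_k\rangle=0$ for all $k$, then $T=0$. *)

theory Defs
  imports "HOL-Analysis.Analysis"
begin

text \<open>Sequences are represented as nat \<Rightarrow> complex; the real space l2 consists of the real-valued ones.\<close>

definition scalar_field :: "complex set \<Rightarrow> bool" where
  "scalar_field K \<longleftrightarrow> K = \<real> \<or> K = UNIV"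

definition l2 :: "complex set \<Rightarrow> (nat \<Rightarrow> complex) set" where
  "l2 K = {x. (\<forall>n. x n \<in> K) \<and> summable (\<lambda>n. (cmod (x n))\<^sup>2)}"

definition l2_inner :: "(nat \<Rightarrow> complex) \<Rightarrow> (nat \<Rightarrow> complex) \<Rightarrow> complex" where
  "l2_inner x y = (\<Sum>n. x n * cnj (y n))"

definition l2_norm :: "(nat \<Rightarrow> complex) \<Rightarrow> real" where
  "l2_norm x = sqrt (\<Sum>n. (cmod (x n))\<^sup>2)"

definition unit_vec :: "nat \<Rightarrow> nat \<Rightarrow> complex" where
  "unit_vec j = (\<lambda>n. if n = j then 1 else 0)"

definition bounded_op :: "complex set \<Rightarrow> ((nat \<Rightarrow> complex) \<Rightarrow> (nat \<Rightarrow> complex)) \<Rightarrow> bool" where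
  "bounded_op K T \<longleftrightarrow>
     (\<forall>x\<in>l2 K. T x \<in> l2 K) \<and>
     (\<forall>c\<in>K. \<forall>x\<in>l2 K. \<forall>y\<in>l2 K. T (\<lambda>n. c * x n + y n) = (\<lambda>n. c * T x n + T y n)) \<and>
     (\<exists>C. \<forall>x\<in>l2 K. l2_norm (T x) \<le> C * l2_norm x)"

definition hilbert_schmidt :: "complex set \<Rightarrow> ((nat \<Rightarrow> complex) \<Rightarrow> (nat \<Rightarrow> complex)) \<Rightarrow> bool" where
  "hilbert_schmidt K T \<longleftrightarrow> bounded_op K T \<and> summable (\<lambda>j. (l2_norm (T (unit_vec j)))\<^sup>2)"

definition self_adjoint_op :: "complex set \<Rightarrow> ((nat \<Rightarrow> complex) \<Rightarrow> (nat \<Rightarrow> complex)) \<Rightarrow> bool" where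
  "self_adjoint_op K T \<longleftrightarrow> (\<forall>x\<in>l2 K. \<forall>y\<in>l2 K. l2_inner (T x) y = l2_inner x (T y))"

definition is_frame :: "complex set \<Rightarrow> (nat \<Rightarrow> nat \<Rightarrow> complex) \<Rightarrow> bool" where
  "is_frame K X \<longleftrightarrow> (\<forall>k. X k \<in> l2 K) \<and>
     (\<exists>A B. 0 < A \<and> 0 < B \<and>
        (\<forall>x\<in>l2 K. summable (\<lambda>k. (cmod (l2_inner x (X k)))\<^sup>2) \<and>
            A * (l2_norm x)\<^sup>2 \<le> (\<Sum>k. (cmod (l2_inner x (X k)))\<^sup>2) \<and>
            (\<Sum>k. (cmod (l2_inner x (X k)))\<^sup>2) \<le> B * (l2_norm x)\<^sup>2))"

definition injective_family :: "complex set \<Rightarrow> (nat \<Rightarrow> nat \<Rightarrow> complex) \<Rightarrow> bool" where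
  "injective_family K X \<longleftrightarrow>
     (\<forall>T. hilbert_schmidt K T \<and> self_adjoint_op K T \<and> (\<forall>k. l2_inner (T (X k)) (X k) = 0)
          \<longrightarrow> (\<forall>x\<in>l2 K. T x = (\<lambda>n. 0)))"

end

theory Submission
  imports Defs "HOL-Library.Diagonal_Subsequence"
begin

lemma suminf_infsum:
  fixes f :: "nat \<Rightarrow> 'a::banach"
  assumes "f summable_on UNIV"
  shows "suminf f = infsum f UNIV"
  using assms has_sum_imp_sums has_sum_infsum sums_unique by metis

lemma sums_infsum:
  fixes f :: "nat \<Rightarrow> 'a::banach"
  assumes "f summable_on UNIV"
  shows "f sums infsum f UNIV"
  using assms has_sum_imp_sums has_sum_infsum by metis

lemma summable_on_diff:
  fixes f g :: "'a \<Rightarrow> 'b::{topological_ab_group_add}"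
  assumes "f summable_on A" "g summable_on A"
  shows "(\<lambda>x. f x - g x) summable_on A"
proof -
  have "(\<lambda>x. f x + - g x) summable_on A"
    using summable_on_add[OF assms(1)] assms(2) summable_on_uminus by blast
  thus ?thesis by simp
qed

lemma infsum_diff:
  fixes f g :: "'a \<Rightarrow> 'b::{topological_ab_group_add, t2_space}"
  assumes "f summable_on A" "g summable_on A"
  shows "infsum (\<lambda>x. f x - g x) A = infsum f A - infsum g A"
proof -
  have "infsum (\<lambda>x. f x + - g x) A = infsum f A + infsum (\<lambda>x. - g x) A"
    using infsum_add[OF assms(1)] assms(2) summable_on_uminus by blast
  thus ?thesis by (simp add: infsum_uminus)
qed

lemma discr_le:
  fixes F S G :: real
  assumes "\<And>t. 0 \<le> t^2 * F - 2 * t * S + G" "F \<ge> 0"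
  shows "S^2 \<le> F * G"
proof (cases "F = 0")
  case True
  show ?thesis
  proof (cases "S = 0")
    case False
    have "0 \<le> ((G+1)/(2*S))^2 * F - 2 * ((G+1)/(2*S)) * S + G" by (rule assms)
    with True False show ?thesis by (simp add: field_simps)
  qed (use True in simp)
next
  case False
  hence Fp: "F > 0" using assms(2) by simp
  have "0 \<le> (S/F)^2 * F - 2 * (S/F) * S + G" by (rule assms)
  hence "0 \<le> S^2/F - 2 * S^2/F + G" using Fp by (simp add: power2_eq_square field_simps)
  hence "S^2/F \<le> G" by simp
  thus ?thesis using Fp by (simp add: field_simps)
qed

lemma CS_real:
  fixes f g :: "'a \<Rightarrow> real"
  assumes f: "(\<lambda>i. (f i)^2) summable_on A" and g: "(\<lambda>i. (g i)^2) summable_on A"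
  shows "(\<lambda>i. f i * g i) summable_on A"
    and "(infsum (\<lambda>i. f i * g i) A)^2 \<le> infsum (\<lambda>i. (f i)^2) A * infsum (\<lambda>i. (g i)^2) A"
proof -
  have fg2: "(\<lambda>i. ((f i)^2 + (g i)^2)/2) summable_on A"
    using summable_on_cmult_left[OF summable_on_add[OF f g], of "1/2"] by simp
  have "(\<lambda>i. norm (f i * g i)) summable_on A"
  proof (rule summable_on_comparison_test[OF fg2])
    fix i show "norm (f i * g i) \<le> ((f i)^2 + (g i)^2)/2"
      using sum_squares_bound[of "\<bar>f i\<bar>" "\<bar>g i\<bar>"] by (simp add: abs_mult power2_abs)
  qed simp
  thus fg: "(\<lambda>i. f i * g i) summable_on A" using summable_on_iff_abs_summable_on_real by blast
  show "(infsum (\<lambda>i. f i * g i) A)^2 \<le> infsum (\<lambda>i. (f i)^2) A * infsum (\<lambda>i. (g i)^2) A"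
  proof (rule discr_le)
    fix t :: real
    have s1: "(\<lambda>i. t^2 * (f i)^2) summable_on A" using summable_on_cmult_right[OF f] .
    have s2: "(\<lambda>i. 2 * t * (f i * g i)) summable_on A" using summable_on_cmult_right[OF fg] .
    have "(\<lambda>i. t^2 * (f i)^2 - 2 * t * (f i * g i)) summable_on A"
      using summable_on_diff[OF s1 s2] .
    have "infsum (\<lambda>i. (t * f i - g i)^2) A = infsum (\<lambda>i. (t^2 * (f i)^2 - 2 * t * (f i * g i)) + (g i)^2) A"
      by (rule infsum_cong) (simp add: power2_eq_square algebra_simps)
    also have "\<dots> = infsum (\<lambda>i. t^2 * (f i)^2 - 2 * t * (f i * g i)) A + infsum (\<lambda>i. (g i)^2) A"
      by (rule infsum_add[OF summable_on_diff[OF s1 s2] g])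
    also have "infsum (\<lambda>i. t^2 * (f i)^2 - 2 * t * (f i * g i)) A = infsum (\<lambda>i. t^2 * (f i)^2) A - infsum (\<lambda>i. 2 * t * (f i * g i)) A"
      by (rule infsum_diff[OF s1 s2])
    also have "infsum (\<lambda>i. t^2 * (f i)^2) A = t^2 * infsum (\<lambda>i. (f i)^2) A"
      by (rule infsum_cmult_right) (use f in simp)
    also have "infsum (\<lambda>i. 2 * t * (f i * g i)) A = 2 * t * infsum (\<lambda>i. f i * g i) A"
      by (rule infsum_cmult_right) (use fg in simp)
    finally have "infsum (\<lambda>i. (t * f i - g i)^2) A = t^2 * infsum (\<lambda>i. (f i)^2) A - 2 * t * infsum (\<lambda>i. f i * g i) A + infsum (\<lambda>i. (g i)^2) A" .
    moreover have "infsum (\<lambda>i. (t * f i - g i)^2) A \<ge> 0" by (rule infsum_nonneg) simp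
    ultimately show "0 \<le> t\<^sup>2 * infsum (\<lambda>i. (f i)\<^sup>2) A - 2 * t * infsum (\<lambda>i. f i * g i) A + infsum (\<lambda>i. (g i)\<^sup>2) A" by simp
  qed (rule infsum_nonneg, simp)
qed

lemma bij_swap_UNIV: "bij_betw prod.swap (UNIV::('a\<times>'b) set) UNIV"
  by (simp add: bij_betw_def)

lemma infsum_swap2:
  fixes f :: "'a \<Rightarrow> 'b \<Rightarrow> 'c::{comm_monoid_add,t2_space}"
  shows "infsum (\<lambda>(i,j). f j i) UNIV = infsum (\<lambda>(i,j). f i j) UNIV"
  using infsum_reindex_bij_betw[OF bij_swap_UNIV, of "\<lambda>(i,j). f i j"]
  by (simp add: case_prod_unfold)

lemma summable_swap2:
  fixes f :: "'a \<Rightarrow> 'b \<Rightarrow> 'c::{comm_monoid_add,topological_space}"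
  shows "(\<lambda>(i,j). f j i) summable_on UNIV \<longleftrightarrow> (\<lambda>(i,j). f i j) summable_on UNIV"
  using summable_on_reindex_bij_betw[OF bij_swap_UNIV, of "\<lambda>(i,j). f i j"]
  by (simp add: case_prod_unfold)

lemma CS_cx:
  fixes a b :: "'a \<Rightarrow> complex"
  assumes a: "(\<lambda>i. (cmod (a i))^2) summable_on A" and b: "(\<lambda>i. (cmod (b i))^2) summable_on A"
  shows "(\<lambda>i. a i * b i) summable_on A"
    and "(\<lambda>i. cmod (a i * b i)) summable_on A"
    and "(cmod (infsum (\<lambda>i. a i * b i) A))^2 \<le> infsum (\<lambda>i. (cmod (a i))^2) A * infsum (\<lambda>i. (cmod (b i))^2) A"
proof -
  have n: "(\<lambda>i. cmod (a i) * cmod (b i)) summable_on A"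
    and ineq: "(infsum (\<lambda>i. cmod (a i) * cmod (b i)) A)^2 \<le> infsum (\<lambda>i. (cmod (a i))^2) A * infsum (\<lambda>i. (cmod (b i))^2) A"
    using CS_real[OF a b] by auto
  show n': "(\<lambda>i. cmod (a i * b i)) summable_on A" using n by (simp add: norm_mult)
  thus s: "(\<lambda>i. a i * b i) summable_on A"
    using summable_on_iff_abs_summable_on_complex by blast
  have "cmod (infsum (\<lambda>i. a i * b i) A) \<le> infsum (\<lambda>i. cmod (a i * b i)) A"
    by (rule norm_infsum_bound) (use n' in simp)
  also have "\<dots> = infsum (\<lambda>i. cmod (a i) * cmod (b i)) A" by (simp add: norm_mult)
  finally have "(cmod (infsum (\<lambda>i. a i * b i) A))^2 \<le> (infsum (\<lambda>i. cmod (a i) * cmod (b i)) A)^2"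
    by (rule power_mono) simp
  with ineq show "(cmod (infsum (\<lambda>i. a i * b i) A))^2 \<le> infsum (\<lambda>i. (cmod (a i))^2) A * infsum (\<lambda>i. (cmod (b i))^2) A"
    by linarith
qed

lemma infsum_of_real':
  assumes "f summable_on A"
  shows "infsum (\<lambda>x. complex_of_real (f x)) A = complex_of_real (infsum f A)"
  using has_sum_bounded_linear[OF bounded_linear_of_real has_sum_infsum[OF assms]] infsumI by blast

lemma infsum_Re:
  assumes "f summable_on A"
  shows "infsum (\<lambda>x. Re (f x)) A = Re (infsum f A)"
  using has_sum_bounded_linear[OF bounded_linear_Re has_sum_infsum[OF assms]] infsumI by blast

definition nsq :: "(nat \<Rightarrow> complex) \<Rightarrow> real" where
  "nsq x = infsum (\<lambda>n. (cmod (x n))^2) UNIV"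

abbreviation l2s :: "(nat \<Rightarrow> complex) \<Rightarrow> bool" where
  "l2s x \<equiv> (\<lambda>n. (cmod (x n))^2) summable_on UNIV"

lemma l2s_iff: "l2s x \<longleftrightarrow> summable (\<lambda>n. (cmod (x n))^2)"
  by (rule summable_on_UNIV_nonneg_real_iff) simp

lemma l2_mem: "x \<in> l2 K \<longleftrightarrow> (\<forall>n. x n \<in> K) \<and> l2s x"
  unfolding l2_def l2s_iff by simp

lemma nsq_nonneg: "nsq x \<ge> 0"
  unfolding nsq_def by (rule infsum_nonneg) simp

lemma l2_norm_nsq: "l2s x \<Longrightarrow> l2_norm x = sqrt (nsq x)"
  unfolding l2_norm_def nsq_def by (simp add: suminf_infsum)

lemma l2_norm_sq: "l2s x \<Longrightarrow> (l2_norm x)^2 = nsq x"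
  using l2_norm_nsq nsq_nonneg by simp

lemma l2_inner_infsum:
  assumes "l2s x" "l2s y"
  shows "(\<lambda>n. x n * cnj (y n)) summable_on UNIV"
    and "l2_inner x y = infsum (\<lambda>n. x n * cnj (y n)) UNIV"
    and "(cmod (l2_inner x y))^2 \<le> nsq x * nsq y"
proof -
  have y': "(\<lambda>n. (cmod (cnj (y n)))^2) summable_on UNIV" using assms(2) by simp
  show s: "(\<lambda>n. x n * cnj (y n)) summable_on UNIV" using CS_cx(1)[OF assms(1) y'] .
  show e: "l2_inner x y = infsum (\<lambda>n. x n * cnj (y n)) UNIV"
    unfolding l2_inner_def by (rule suminf_infsum[OF s])
  show "(cmod (l2_inner x y))^2 \<le> nsq x * nsq y"
    using CS_cx(3)[OF assms(1) y'] unfolding e nsq_def by simp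
qed

lemma coord_le: "l2s x \<Longrightarrow> (cmod (x i))^2 \<le> nsq x"
  unfolding nsq_def
  using finite_sum_le_infsum[of "\<lambda>n. (cmod (x n))^2" UNIV "{i}"] by simp

lemma l2_inner_self: "l2s x \<Longrightarrow> l2_inner x x = complex_of_real (nsq x)"
proof -
  assume a: "l2s x"
  have "l2_inner x x = infsum (\<lambda>n. x n * cnj (x n)) UNIV" using l2_inner_infsum(2)[OF a a] .
  also have "\<dots> = infsum (\<lambda>n. complex_of_real ((cmod (x n))^2)) UNIV"
    by (rule infsum_cong) (simp add: complex_norm_square[symmetric] del: of_real_power)
  also have "\<dots> = complex_of_real (nsq x)"
    unfolding nsq_def using a by (rule infsum_of_real')
  finally show ?thesis .
qed

definition hsumm :: "(nat \<Rightarrow> nat \<Rightarrow> complex) \<Rightarrow> bool" where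
  "hsumm M \<longleftrightarrow> (\<lambda>(i,j). (cmod (M i j))^2) summable_on UNIV"

definition hsn :: "(nat \<Rightarrow> nat \<Rightarrow> complex) \<Rightarrow> real" where
  "hsn M = infsum (\<lambda>(i,j). (cmod (M i j))^2) UNIV"

definition rowsq :: "(nat \<Rightarrow> nat \<Rightarrow> complex) \<Rightarrow> nat \<Rightarrow> real" where
  "rowsq M i = infsum (\<lambda>j. (cmod (M i j))^2) UNIV"

definition opM :: "(nat \<Rightarrow> nat \<Rightarrow> complex) \<Rightarrow> (nat \<Rightarrow> complex) \<Rightarrow> nat \<Rightarrow> complex" where
  "opM M x = (\<lambda>i. infsum (\<lambda>j. M i j * x j) UNIV)"

definition qf :: "(nat \<Rightarrow> nat \<Rightarrow> complex) \<Rightarrow> (nat \<Rightarrow> complex) \<Rightarrow> (nat \<Rightarrow> complex) \<Rightarrow> complex" where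
  "qf M x y = infsum (\<lambda>(i,j). M i j * x j * cnj (y i)) UNIV"

definition adj :: "(nat \<Rightarrow> nat \<Rightarrow> complex) \<Rightarrow> nat \<Rightarrow> nat \<Rightarrow> complex" where
  "adj M = (\<lambda>i j. cnj (M j i))"

lemma hsn_nonneg: "hsn M \<ge> 0"
  unfolding hsn_def by (rule infsum_nonneg) auto

lemma hsumm_row:
  assumes "hsumm M"
  shows "(\<lambda>j. (cmod (M i j))^2) summable_on UNIV"
proof -
  have "(\<lambda>(x,y). (cmod (M x y))^2) summable_on Sigma UNIV (\<lambda>_. UNIV)"
    using assms unfolding hsumm_def by simp
  from summable_on_SigmaD1[OF this, of i] show ?thesis by simp
qed

lemma hsumm_rows:
  assumes "hsumm M"
  shows "rowsq M summable_on UNIV" "infsum (rowsq M) UNIV = hsn M"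
proof -
  have s: "(\<lambda>(x,y). (cmod (M x y))^2) summable_on Sigma UNIV (\<lambda>_. UNIV)"
    using assms unfolding hsumm_def by simp
  have "(\<lambda>x. infsum (\<lambda>y. (\<lambda>(x,y). (cmod (M x y))^2) (x, y)) UNIV) summable_on UNIV"
    by (rule summable_on_SigmaD[OF s]) (use hsumm_row[OF assms] in simp)
  thus "rowsq M summable_on UNIV" unfolding rowsq_def by simp
  have "infsum (\<lambda>x. infsum (\<lambda>y. (\<lambda>(x,y). (cmod (M x y))^2) (x, y)) UNIV) UNIV = infsum (\<lambda>(x,y). (cmod (M x y))^2) (Sigma UNIV (\<lambda>_. UNIV))"
    by (rule infsum_Sigma_banach[OF s])
  thus "infsum (rowsq M) UNIV = hsn M" unfolding rowsq_def hsn_def by simp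
qed

lemma rowsq_nonneg: "rowsq M i \<ge> 0"
  unfolding rowsq_def by (rule infsum_nonneg) auto

lemma adj_adj[simp]: "adj (adj M) = M"
  unfolding adj_def by simp

lemma hsumm_adj: "hsumm (adj M) \<longleftrightarrow> hsumm M"
  unfolding hsumm_def adj_def
  using summable_swap2[of "\<lambda>i j. (cmod (M i j))^2"] by simp

lemma hsn_adj: "hsn (adj M) = hsn M"
  unfolding hsn_def adj_def
  using infsum_swap2[of "\<lambda>i j. (cmod (M i j))^2"] by simp

lemma opM_row:
  assumes "hsumm M" "l2s x"
  shows "(\<lambda>j. M i j * x j) summable_on UNIV"
    and "(cmod (opM M x i))^2 \<le> rowsq M i * nsq x"
  using CS_cx[OF hsumm_row[OF assms(1)] assms(2)] unfolding opM_def rowsq_def nsq_def by auto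

lemma opM_l2s:
  assumes "hsumm M" "l2s x"
  shows "l2s (opM M x)" and "nsq (opM M x) \<le> hsn M * nsq x"
proof -
  have s: "(\<lambda>i. rowsq M i * nsq x) summable_on UNIV"
    using summable_on_cmult_left[OF hsumm_rows(1)[OF assms(1)]] .
  show l: "l2s (opM M x)"
    by (rule summable_on_comparison_test[OF s]) (use opM_row(2)[OF assms] in auto)
  have "nsq (opM M x) \<le> infsum (\<lambda>i. rowsq M i * nsq x) UNIV"
    unfolding nsq_def[of "opM M x"] by (rule infsum_mono[OF l s]) (use opM_row(2)[OF assms] in auto)
  also have "\<dots> = hsn M * nsq x"
    using infsum_cmult_left[of "nsq x" "rowsq M" UNIV] hsumm_rows[OF assms(1)] by simp
  finally show "nsq (opM M x) \<le> hsn M * nsq x" .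
qed

lemma pair_summable:
  assumes "l2s x" "l2s y"
  shows "(\<lambda>(i,j). (cmod (x j * cnj (y i)))^2) summable_on UNIV"
proof -
  have "(\<lambda>p. (cmod (y (fst p)))^2 * (cmod (x (snd p)))^2) summable_on Sigma UNIV (\<lambda>_. UNIV)"
  proof (rule summable_on_SigmaI)
    fix i :: nat
    show "((\<lambda>j. (cmod (y (fst (i,j))))^2 * (cmod (x (snd (i,j))))^2) has_sum ((cmod (y i))^2 * nsq x)) UNIV"
      using has_sum_cmult_right[OF has_sum_infsum[OF assms(1)], of "(cmod (y i))^2"]
      unfolding nsq_def by simp
    show "(\<lambda>i. (cmod (y i))^2 * nsq x) summable_on UNIV"
      using summable_on_cmult_left[OF assms(2)] .
  qed auto
  thus ?thesis by (simp add: case_prod_unfold norm_mult power_mult_distrib mult.commute)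
qed

lemma qf_summable:
  assumes "hsumm M" "l2s x" "l2s y"
  shows "(\<lambda>(i,j). M i j * x j * cnj (y i)) summable_on UNIV"
    and "(cmod (qf M x y))^2 \<le> hsn M * (nsq x * nsq y)"
proof -
  have a: "(\<lambda>p. (cmod ((\<lambda>(i,j). M i j) p))^2) summable_on UNIV"
    using assms(1) unfolding hsumm_def by (simp add: case_prod_unfold)
  have b: "(\<lambda>p. (cmod ((\<lambda>(i,j). x j * cnj (y i)) p))^2) summable_on UNIV"
    using pair_summable[OF assms(2,3)] by (simp add: case_prod_unfold)
  note cs = CS_cx[OF a b]
  show "(\<lambda>(i,j). M i j * x j * cnj (y i)) summable_on UNIV"
    using cs(1) by (simp add: case_prod_unfold mult.assoc)
  have e1: "infsum (\<lambda>p. (cmod ((\<lambda>(i,j). M i j) p))^2) UNIV = hsn M"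
    unfolding hsn_def by (simp add: case_prod_unfold)
  have "infsum (\<lambda>p. (cmod ((\<lambda>(i,j). x j * cnj (y i)) p))^2) UNIV
      = infsum (\<lambda>(i,j). (cmod (y i))^2 * (cmod (x j))^2) (Sigma UNIV (\<lambda>_. UNIV))"
    by (simp add: case_prod_unfold norm_mult power_mult_distrib mult.commute)
  also have "\<dots> = infsum (\<lambda>i. infsum (\<lambda>j. (cmod (y i))^2 * (cmod (x j))^2) UNIV) UNIV"
  proof -
    have ps: "(\<lambda>(i,j). (cmod (y i))^2 * (cmod (x j))^2) summable_on UNIV"
      using pair_summable[OF assms(2,3)] by (simp add: norm_mult power_mult_distrib mult.commute)
    show ?thesis
      using infsum_Sigma_banach[of "\<lambda>(i,j). (cmod (y i))^2 * (cmod (x j))^2" UNIV "\<lambda>_. UNIV"] ps by simp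
  qed
  also have "\<dots> = infsum (\<lambda>i. (cmod (y i))^2 * nsq x) UNIV"
    unfolding nsq_def by (rule infsum_cong) (rule infsum_cmult_right, use assms(2) in simp)
  also have "\<dots> = nsq y * nsq x"
    unfolding nsq_def by (rule infsum_cmult_left) (use assms(3) in simp)
  finally have e2: "infsum (\<lambda>p. (cmod ((\<lambda>(i,j). x j * cnj (y i)) p))^2) UNIV = nsq x * nsq y" by simp
  have e3: "qf M x y = infsum (\<lambda>p. (\<lambda>(i,j). M i j) p * (\<lambda>(i,j). x j * cnj (y i)) p) UNIV"
    unfolding qf_def by (simp add: case_prod_unfold mult.assoc)
  show "(cmod (qf M x y))^2 \<le> hsn M * (nsq x * nsq y)"
  proof -
    have "(cmod (qf M x y))^2 = (cmod (infsum (\<lambda>p. (\<lambda>(i,j). M i j) p * (\<lambda>(i,j). x j * cnj (y i)) p) UNIV))^2"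
      by (simp only: e3)
    also have "\<dots> \<le> infsum (\<lambda>p. (cmod ((\<lambda>(i,j). M i j) p))^2) UNIV * infsum (\<lambda>p. (cmod ((\<lambda>(i,j). x j * cnj (y i)) p))^2) UNIV"
      by (rule cs(3))
    also have "\<dots> = hsn M * (nsq x * nsq y)" by (rule arg_cong2[where f = "(*)", OF e1 e2])
    finally show ?thesis .
  qed
qed

lemma inner_opM:
  assumes "hsumm M" "l2s x" "l2s y"
  shows "l2_inner (opM M x) y = qf M x y"
proof -
  have "l2_inner (opM M x) y = infsum (\<lambda>i. opM M x i * cnj (y i)) UNIV"
    by (rule l2_inner_infsum(2)[OF opM_l2s(1)[OF assms(1,2)] assms(3)])
  also have "\<dots> = infsum (\<lambda>i. infsum (\<lambda>j. M i j * x j * cnj (y i)) UNIV) UNIV"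
    unfolding opM_def
    by (rule infsum_cong, rule infsum_cmult_left[symmetric]) (use opM_row(1)[OF assms(1,2)] in simp)
  also have "\<dots> = infsum (\<lambda>(i,j). M i j * x j * cnj (y i)) (Sigma UNIV (\<lambda>_. UNIV))"
    using infsum_Sigma_banach[of "\<lambda>(i,j). M i j * x j * cnj (y i)" UNIV "\<lambda>_. UNIV"]
      qf_summable(1)[OF assms] by simp
  finally show ?thesis unfolding qf_def by simp
qed

lemma qf_adj: "cnj (qf M y x) = qf (adj M) x y"
proof -
  have "cnj (qf M y x) = infsum (\<lambda>(i,j). cnj (M i j) * cnj (y j) * x i) UNIV"
    unfolding qf_def by (subst infsum_cnj[symmetric]) (simp add: case_prod_unfold del: infsum_cnj)
  also have "\<dots> = infsum (\<lambda>(i,j). cnj (M j i) * cnj (y i) * x j) UNIV"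
    using infsum_swap2[of "\<lambda>i j. cnj (M i j) * cnj (y j) * x i"] by simp
  also have "\<dots> = qf (adj M) x y"
    unfolding qf_def adj_def by (rule infsum_cong) (auto simp: algebra_simps)
  finally show ?thesis .
qed

lemma l2_inner_cnj:
  assumes "l2s x" "l2s y"
  shows "l2_inner x y = cnj (l2_inner y x)"
proof -
  have "cnj (infsum (\<lambda>n. y n * cnj (x n)) UNIV) = infsum (\<lambda>n. cnj (y n * cnj (x n))) UNIV"
    by (rule infsum_cnj[symmetric])
  also have "\<dots> = infsum (\<lambda>n. x n * cnj (y n)) UNIV"
    by (rule infsum_cong) (simp add: mult.commute)
  finally show ?thesis using l2_inner_infsum(2)[OF assms] l2_inner_infsum(2)[OF assms(2,1)] by simp
qed

lemma selfadj_opM: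
  assumes "hsumm M" "adj M = M" "l2s x" "l2s y"
  shows "l2_inner (opM M x) y = l2_inner x (opM M y)"
proof -
  have "l2_inner x (opM M y) = cnj (l2_inner (opM M y) x)"
    by (rule l2_inner_cnj[OF assms(3) opM_l2s(1)[OF assms(1,4)]])
  also have "\<dots> = cnj (qf M y x)" using inner_opM[OF assms(1,4,3)] by simp
  also have "\<dots> = qf M x y" using qf_adj[of M y x] assms(2) by simp
  finally show ?thesis using inner_opM[OF assms(1,3,4)] by simp
qed

lemma qf_real:
  assumes "adj M = M"
  shows "qf M x x = complex_of_real (Re (qf M x x))"
proof -
  have c: "cnj (qf M x x) = qf M x x" using qf_adj[of M x x] assms by simp
  have "Im (qf M x x) = 0" using arg_cong[OF c, of Im] by simp
  thus ?thesis by (simp add: complex_eq_iff)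
qed

lemma has_sum_finsupp:
  fixes f :: "'a \<Rightarrow> 'b::{topological_comm_monoid_add,t2_space}"
  assumes "finite B" "\<And>x. x \<notin> B \<Longrightarrow> f x = 0"
  shows "(f has_sum sum f B) UNIV" "f summable_on UNIV" "infsum f UNIV = sum f B"
proof -
  show h: "(f has_sum sum f B) UNIV" by (rule has_sum_finite_neutralI) (use assms in auto)
  thus "f summable_on UNIV" by (simp add: summable_on_def; blast)
  show "infsum f UNIV = sum f B" using h by (rule infsumI)
qed

lemma single_has_sum:
  fixes c :: "'b::{topological_comm_monoid_add,t2_space}"
  shows "((\<lambda>n. if n = j then c else 0) has_sum c) UNIV"
    "(\<lambda>n. if n = j then c else 0) summable_on UNIV"
    "infsum (\<lambda>n. if n = j then c else 0) UNIV = c"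
  using has_sum_finsupp[of "{j}" "\<lambda>n. if n = j then c else 0"] by auto

lemma K_ops:
  assumes "scalar_field K"
  shows "0 \<in> K" "1 \<in> K" "\<And>r. complex_of_real r \<in> K"
    "\<And>a b. a \<in> K \<Longrightarrow> b \<in> K \<Longrightarrow> a + b \<in> K"
    "\<And>a b. a \<in> K \<Longrightarrow> b \<in> K \<Longrightarrow> a - b \<in> K"
    "\<And>a b. a \<in> K \<Longrightarrow> b \<in> K \<Longrightarrow> a * b \<in> K"
    "\<And>a. a \<in> K \<Longrightarrow> - a \<in> K"
    "\<And>a. a \<in> K \<Longrightarrow> cnj a \<in> K"
    "\<And>a r. a \<in> K \<Longrightarrow> a / complex_of_real r \<in> K"
  using assms unfolding scalar_field_def by (auto simp: complex_is_Real_iff)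

lemma infsum_in_K:
  assumes "scalar_field K" "f summable_on A" "\<And>x. x \<in> A \<Longrightarrow> f x \<in> K"
  shows "infsum f A \<in> K"
proof (cases "K = UNIV")
  case False
  hence K: "K = \<real>" using assms(1) unfolding scalar_field_def by auto
  have "infsum f A = infsum (\<lambda>x. complex_of_real (Re (f x))) A"
    by (rule infsum_cong) (use assms(3) K in \<open>auto simp: complex_is_Real_iff\<close>)
  also have "\<dots> = complex_of_real (infsum (\<lambda>x. Re (f x)) A)"
    by (rule infsum_of_real') (rule summable_on_bounded_linear[OF bounded_linear_Re assms(2)])
  finally show ?thesis using K by simp
qed simp

definition Kmat :: "complex set \<Rightarrow> (nat \<Rightarrow> nat \<Rightarrow> complex) \<Rightarrow> bool" where
  "Kmat K M \<longleftrightarrow> (\<forall>i j. M i j \<in> K)"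

lemma unit_vec_props:
  assumes "scalar_field K"
  shows "l2s (unit_vec j)" "nsq (unit_vec j) = 1" "unit_vec j \<in> l2 K" "l2_norm (unit_vec j) = 1"
proof -
  have e: "(\<lambda>n. (cmod (unit_vec j n))^2) = (\<lambda>n. if n = j then 1 else 0)"
    unfolding unit_vec_def by auto
  show l: "l2s (unit_vec j)" unfolding e by (rule single_has_sum)
  show n: "nsq (unit_vec j) = 1" unfolding nsq_def e by (rule single_has_sum)
  show "unit_vec j \<in> l2 K" unfolding l2_mem using l K_ops[OF assms] unfolding unit_vec_def by auto
  show "l2_norm (unit_vec j) = 1" using l2_norm_nsq[OF l] n by simp
qed

lemma inner_unit_vec:
  assumes "l2s y"
  shows "l2_inner (unit_vec j) y = cnj (y j)"
proof -
  have l: "l2s (unit_vec j)" using unit_vec_props(1)[of UNIV] unfolding scalar_field_def by simp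
  have "l2_inner (unit_vec j) y = infsum (\<lambda>n. unit_vec j n * cnj (y n)) UNIV"
    by (rule l2_inner_infsum(2)[OF l assms])
  also have "\<dots> = infsum (\<lambda>n. if n = j then cnj (y j) else 0) UNIV"
    by (rule infsum_cong) (simp add: unit_vec_def)
  also have "\<dots> = cnj (y j)" by (rule single_has_sum)
  finally show ?thesis .
qed

lemma opM_unit_vec:
  "opM M (unit_vec j) = (\<lambda>i. M i j)"
proof
  fix i
  have "opM M (unit_vec j) i = infsum (\<lambda>n. if n = j then M i j else 0) UNIV"
    unfolding opM_def by (rule infsum_cong) (simp add: unit_vec_def)
  also have "\<dots> = M i j" by (rule single_has_sum)
  finally show "opM M (unit_vec j) i = M i j" .
qed

lemma opM_K:
  assumes "scalar_field K" "hsumm M" "Kmat K M" "x \<in> l2 K"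
  shows "opM M x \<in> l2 K"
proof -
  have x: "l2s x" "\<And>n. x n \<in> K" using assms(4) unfolding l2_mem by auto
  show ?thesis unfolding l2_mem
  proof
    show "\<forall>n. opM M x n \<in> K"
    proof
      fix i
      show "opM M x i \<in> K" unfolding opM_def
        by (rule infsum_in_K[OF assms(1) opM_row(1)[OF assms(2) x(1)]])
           (use assms(3) x(2) K_ops[OF assms(1)] in \<open>auto simp: Kmat_def\<close>)
    qed
    show "l2s (opM M x)" by (rule opM_l2s(1)[OF assms(2) x(1)])
  qed
qed

lemma opM_linear:
  assumes "hsumm M" "l2s x" "l2s y"
  shows "opM M (\<lambda>n. c * x n + y n) = (\<lambda>n. c * opM M x n + opM M y n)"
proof
  fix i
  have sx: "(\<lambda>j. M i j * x j) summable_on UNIV" by (rule opM_row(1)[OF assms(1,2)])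
  have sy: "(\<lambda>j. M i j * y j) summable_on UNIV" by (rule opM_row(1)[OF assms(1,3)])
  have "opM M (\<lambda>n. c * x n + y n) i = infsum (\<lambda>j. c * (M i j * x j) + M i j * y j) UNIV"
    unfolding opM_def by (rule infsum_cong) (simp add: algebra_simps)
  also have "\<dots> = infsum (\<lambda>j. c * (M i j * x j)) UNIV + infsum (\<lambda>j. M i j * y j) UNIV"
    by (rule infsum_add[OF summable_on_cmult_right[OF sx] sy])
  also have "infsum (\<lambda>j. c * (M i j * x j)) UNIV = c * infsum (\<lambda>j. M i j * x j) UNIV"
    by (rule infsum_cmult_right) (use sx in simp)
  finally show "opM M (\<lambda>n. c * x n + y n) i = c * opM M x i + opM M y i" unfolding opM_def by simp
qed

lemma l2s_lin:
  assumes "l2s x" "l2s y"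
  shows "l2s (\<lambda>n. c * x n + y n)"
proof -
  have "(\<lambda>n. 2 * (cmod c)^2 * (cmod (x n))^2 + 2 * (cmod (y n))^2) summable_on UNIV"
    by (intro summable_on_add summable_on_cmult_right assms)
  thus ?thesis
  proof (rule summable_on_comparison_test)
    fix n
    have "cmod (c * x n + y n) \<le> cmod c * cmod (x n) + cmod (y n)"
      using norm_triangle_ineq[of "c * x n" "y n"] by (simp add: norm_mult)
    hence "(cmod (c * x n + y n))^2 \<le> (cmod c * cmod (x n) + cmod (y n))^2"
      by (rule power_mono) simp
    also have "\<dots> \<le> 2 * (cmod c)^2 * (cmod (x n))^2 + 2 * (cmod (y n))^2"
      using sum_squares_bound[of "cmod c * cmod (x n)" "cmod (y n)"]
      by (simp add: power2_eq_square algebra_simps)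
    finally show "(cmod (c * x n + y n))^2 \<le> 2 * (cmod c)^2 * (cmod (x n))^2 + 2 * (cmod (y n))^2" .
  qed simp
qed

lemma hs_opM:
  assumes "scalar_field K" "hsumm M" "Kmat K M"
  shows "hilbert_schmidt K (opM M)"
proof -
  have bo: "bounded_op K (opM M)" unfolding bounded_op_def
  proof (intro conjI)
    show "\<forall>x\<in>l2 K. opM M x \<in> l2 K" using opM_K[OF assms] by blast
  next
    show "\<forall>c\<in>K. \<forall>x\<in>l2 K. \<forall>y\<in>l2 K. opM M (\<lambda>n. c * x n + y n) = (\<lambda>n. c * opM M x n + opM M y n)"
      using opM_linear[OF assms(2)] by (auto simp: l2_mem)
  next
    show "\<exists>C. \<forall>x\<in>l2 K. l2_norm (opM M x) \<le> C * l2_norm x"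
    proof (intro exI ballI)
      fix x assume "x \<in> l2 K"
      hence x: "l2s x" unfolding l2_mem by auto
      have "nsq (opM M x) \<le> hsn M * nsq x" by (rule opM_l2s(2)[OF assms(2) x])
      hence "sqrt (nsq (opM M x)) \<le> sqrt (hsn M * nsq x)" by (rule real_sqrt_le_mono)
      thus "l2_norm (opM M x) \<le> sqrt (hsn M) * l2_norm x"
        using l2_norm_nsq[OF x] l2_norm_nsq[OF opM_l2s(1)[OF assms(2) x]] by (simp add: real_sqrt_mult)
    qed
  qed
  have "(\<lambda>j. (l2_norm (opM M (unit_vec j)))^2) = rowsq (adj M)"
  proof
    fix j
    have l: "l2s (\<lambda>i. M i j)" using hsumm_row[of "adj M" j] assms(2) hsumm_adj
      unfolding adj_def by simp
    have "(l2_norm (opM M (unit_vec j)))^2 = nsq (\<lambda>i. M i j)"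
      unfolding opM_unit_vec using l2_norm_sq[OF l] .
    also have "\<dots> = rowsq (adj M) j" unfolding nsq_def rowsq_def adj_def by simp
    finally show "(l2_norm (opM M (unit_vec j)))^2 = rowsq (adj M) j" .
  qed
  moreover have "summable (rowsq (adj M))"
    using hsumm_rows(1)[of "adj M"] assms(2) hsumm_adj summable_on_UNIV_nonneg_real_iff rowsq_nonneg
    by metis
  ultimately show ?thesis using bo unfolding hilbert_schmidt_def by simp
qed

lemma sa_opM:
  assumes "hsumm M" "adj M = M"
  shows "self_adjoint_op K (opM M)"
  unfolding self_adjoint_op_def using selfadj_opM[OF assms] by (auto simp: l2_mem)

definition mT :: "((nat \<Rightarrow> complex) \<Rightarrow> (nat \<Rightarrow> complex)) \<Rightarrow> nat \<Rightarrow> nat \<Rightarrow> complex" where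
  "mT T = (\<lambda>i j. T (unit_vec j) i)"

lemma bo_lin:
  assumes "bounded_op K T" "c \<in> K" "x \<in> l2 K" "y \<in> l2 K"
  shows "T (\<lambda>n. c * x n + y n) = (\<lambda>n. c * T x n + T y n)"
  using assms unfolding bounded_op_def by blast

lemma bo_l2:
  assumes "bounded_op K T" "x \<in> l2 K"
  shows "T x \<in> l2 K"
  using assms unfolding bounded_op_def by blast

lemma bo_bound:
  assumes "bounded_op K T"
  obtains C where "C \<ge> 0" "\<And>x. x \<in> l2 K \<Longrightarrow> l2_norm (T x) \<le> C * l2_norm x"
proof -
  obtain C where C: "\<And>x. x \<in> l2 K \<Longrightarrow> l2_norm (T x) \<le> C * l2_norm x"
    using assms unfolding bounded_op_def by blast
  have "l2_norm (T x) \<le> \<bar>C\<bar> * l2_norm x" if "x \<in> l2 K" for x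
  proof -
    have "0 \<le> l2_norm x" using l2_norm_nsq[of x] nsq_nonneg[of x] that unfolding l2_mem by simp
    hence "C * l2_norm x \<le> \<bar>C\<bar> * l2_norm x" by (intro mult_right_mono) simp_all
    thus ?thesis using C[OF that] by linarith
  qed
  thus ?thesis using that[of "\<bar>C\<bar>"] by simp
qed

lemma l2_zero: "scalar_field K \<Longrightarrow> (\<lambda>n. 0) \<in> l2 K"
  unfolding l2_def using K_ops(1) by auto

lemma bo_zero:
  assumes "scalar_field K" "bounded_op K T"
  shows "T (\<lambda>n. 0) = (\<lambda>n. 0)"
proof -
  have "T (\<lambda>n. (-1) * 0 + 0) = (\<lambda>n. (-1) * T (\<lambda>n. 0) n + T (\<lambda>n. 0) n)"
    by (rule bo_lin[OF assms(2) _ l2_zero[OF assms(1)] l2_zero[OF assms(1)]])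
       (use K_ops[OF assms(1)] in auto)
  thus ?thesis by simp
qed

definition trunc :: "nat \<Rightarrow> (nat \<Rightarrow> complex) \<Rightarrow> nat \<Rightarrow> complex" where
  "trunc N x = (\<lambda>n. if n < N then x n else 0)"

lemma trunc_l2:
  assumes "scalar_field K" "x \<in> l2 K"
  shows "trunc N x \<in> l2 K"
proof -
  have "l2s (trunc N x)"
    by (rule has_sum_finsupp(2)[of "{..<N}"]) (auto simp: trunc_def)
  thus ?thesis using assms K_ops(1)[OF assms(1)] unfolding l2_mem trunc_def by auto
qed

lemma T_trunc:
  assumes "scalar_field K" "bounded_op K T" "x \<in> l2 K"
  shows "T (trunc N x) = (\<lambda>i. \<Sum>j<N. x j * T (unit_vec j) i)"
proof (induction N)
  case 0
  have "trunc 0 x = (\<lambda>n. 0)" unfolding trunc_def by simp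
  thus ?case using bo_zero[OF assms(1,2)] by simp
next
  case (Suc N)
  have xK: "x N \<in> K" using assms(3) unfolding l2_mem by auto
  have "trunc (Suc N) x = (\<lambda>n. x N * unit_vec N n + trunc N x n)"
    unfolding trunc_def unit_vec_def by (auto simp: fun_eq_iff less_Suc_eq)
  hence "T (trunc (Suc N) x) = (\<lambda>n. x N * T (unit_vec N) n + T (trunc N x) n)"
    using bo_lin[OF assms(2) xK unit_vec_props(3)[OF assms(1)] trunc_l2[OF assms(1,3)]] by simp
  thus ?case using Suc by (simp add: add.commute)
qed

lemma hs_mT:
  assumes "scalar_field K" "hilbert_schmidt K T"
  shows "hsumm (mT T)" "Kmat K (mT T)"
proof -
  have bo: "bounded_op K T" using assms(2) unfolding hilbert_schmidt_def by simp
  have col: "T (unit_vec j) \<in> l2 K" for j by (rule bo_l2[OF bo unit_vec_props(3)[OF assms(1)]])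
  show "Kmat K (mT T)" unfolding Kmat_def mT_def using col unfolding l2_mem by auto
  have sj: "summable (\<lambda>j. (l2_norm (T (unit_vec j)))^2)" using assms(2) unfolding hilbert_schmidt_def by simp
  have e: "(l2_norm (T (unit_vec j)))^2 = nsq (T (unit_vec j))" for j
    using l2_norm_sq col unfolding l2_mem by blast
  have g: "(\<lambda>j. nsq (T (unit_vec j))) summable_on UNIV"
    using sj unfolding e by (subst summable_on_UNIV_nonneg_real_iff) (auto simp: nsq_nonneg)
  have "(\<lambda>p. (cmod (T (unit_vec (fst p)) (snd p)))^2) summable_on Sigma UNIV (\<lambda>_. UNIV)"
  proof (rule summable_on_SigmaI)
    fix j :: nat
    show "((\<lambda>i. (cmod (T (unit_vec (fst (j,i))) (snd (j,i))))^2) has_sum nsq (T (unit_vec j))) UNIV"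
      using has_sum_infsum col unfolding l2_mem nsq_def by auto
  qed (use g in auto)
  hence "(\<lambda>(j,i). (cmod (T (unit_vec j) i))^2) summable_on UNIV" by (simp add: case_prod_unfold)
  thus "hsumm (mT T)" unfolding hsumm_def mT_def
    using summable_swap2[of "\<lambda>j i. (cmod (T (unit_vec j) i))^2"] by simp
qed

lemma tail_nsq:
  assumes "l2s x"
  shows "(\<lambda>N. nsq (\<lambda>n. (-1) * trunc N x n + x n)) \<longlonglongrightarrow> 0"
proof -
  have eq: "nsq (\<lambda>n. (-1) * trunc N x n + x n) = nsq x - (\<Sum>n<N. (cmod (x n))^2)" for N
  proof -
    have e1: "(\<lambda>n. (cmod ((-1) * trunc N x n + x n))^2) = (\<lambda>n. if n < N then 0 else (cmod (x n))^2)"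
      unfolding trunc_def by auto
    have s1: "(\<lambda>n. if n < N then 0 else (cmod (x n))^2) summable_on UNIV"
      by (rule summable_on_comparison_test[OF assms]) auto
    have s2: "((\<lambda>n. if n < N then (cmod (x n))^2 else 0) has_sum (\<Sum>n<N. (cmod (x n))^2)) UNIV"
      using has_sum_finsupp(1)[of "{..<N}" "\<lambda>n. if n < N then (cmod (x n))^2 else 0"] by simp
    have "nsq x = infsum (\<lambda>n. (if n < N then 0 else (cmod (x n))^2) + (if n < N then (cmod (x n))^2 else 0)) UNIV"
      unfolding nsq_def by (rule infsum_cong) auto
    also have "\<dots> = infsum (\<lambda>n. if n < N then 0 else (cmod (x n))^2) UNIV + (\<Sum>n<N. (cmod (x n))^2)"
      using infsum_add[OF s1 has_sum_imp_summable[OF s2]] infsumI[OF s2] by simp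
    finally show ?thesis unfolding nsq_def e1 by simp
  qed
  have "(\<lambda>N. \<Sum>n<N. (cmod (x n))^2) \<longlonglongrightarrow> nsq x"
    using sums_infsum[OF assms] unfolding nsq_def sums_def .
  hence "(\<lambda>N. nsq x - (\<Sum>n<N. (cmod (x n))^2)) \<longlonglongrightarrow> nsq x - nsq x"
    by (intro tendsto_intros)
  thus ?thesis unfolding eq by simp
qed

lemma hs_matrix_rep:
  assumes "scalar_field K" "hilbert_schmidt K T" "x \<in> l2 K"
  shows "T x = opM (mT T) x"
proof
  fix i
  have bo: "bounded_op K T" using assms(2) unfolding hilbert_schmidt_def by simp
  obtain C where C: "C \<ge> 0" "\<And>x. x \<in> l2 K \<Longrightarrow> l2_norm (T x) \<le> C * l2_norm x"
    using bo_bound[OF bo] by blast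
  have xl: "l2s x" using assms(3) unfolding l2_mem by simp
  have m1: "(-1::complex) \<in> K" using K_ops[OF assms(1)] by auto
  define tl where "tl N = (\<lambda>n. (-1) * trunc N x n + x n)" for N
  have tlK: "tl N \<in> l2 K" for N
  proof -
    have "(\<lambda>n. (-1) * trunc N x n + x n) \<in> l2 K"
      using opM_K[of K] unfolding l2_mem
      using l2s_lin[of "trunc N x" x "-1"] trunc_l2[OF assms(1,3), of N] assms(3) K_ops[OF assms(1)]
      unfolding l2_mem by auto
    thus ?thesis unfolding tl_def .
  qed
  have Ttl: "T (tl N) = (\<lambda>n. (-1) * T (trunc N x) n + T x n)" for N
    unfolding tl_def by (rule bo_lin[OF bo m1 trunc_l2[OF assms(1,3)] assms(3)])
  have bnd: "norm (T (trunc N x) i - T x i) \<le> sqrt (C^2 * nsq (tl N))" for N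
  proof -
    have Tl: "l2s (T (tl N))" using bo_l2[OF bo tlK] unfolding l2_mem by simp
    have "(cmod (T (tl N) i))^2 \<le> nsq (T (tl N))" by (rule coord_le[OF Tl])
    also have "\<dots> = (l2_norm (T (tl N)))^2" using l2_norm_sq[OF Tl] by simp
    also have "\<dots> \<le> (C * l2_norm (tl N))^2"
      by (rule power_mono[OF C(2)[OF tlK]]) (use l2_norm_nsq[OF Tl] nsq_nonneg in simp)
    also have "\<dots> = C^2 * nsq (tl N)"
      using l2_norm_sq[of "tl N"] tlK unfolding l2_mem by (simp add: power_mult_distrib)
    finally have "(cmod (T (tl N) i))^2 \<le> C^2 * nsq (tl N)" .
    hence "cmod (T (tl N) i) \<le> sqrt (C^2 * nsq (tl N))" using real_le_rsqrt by blast
    moreover have "T (tl N) i = - (T (trunc N x) i - T x i)" using Ttl by simp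
    hence "cmod (T (tl N) i) = cmod (T (trunc N x) i - T x i)" by (simp only: norm_minus_cancel)
    ultimately show ?thesis by linarith
  qed
  have t0: "(\<lambda>N. nsq (tl N)) \<longlonglongrightarrow> 0" using tail_nsq[OF xl] by (simp add: tl_def)
  have "(\<lambda>N. C^2 * nsq (tl N)) \<longlonglongrightarrow> C^2 * 0" by (rule tendsto_mult[OF tendsto_const t0])
  hence t1: "(\<lambda>N. sqrt (C^2 * nsq (tl N))) \<longlonglongrightarrow> 0" using tendsto_real_sqrt by fastforce
  have "(\<lambda>N. T (trunc N x) i - T x i) \<longlonglongrightarrow> 0"
    by (rule Lim_null_comparison[where g="\<lambda>N. sqrt (C^2 * nsq (tl N))", OF _ t1])
       (use bnd in \<open>auto intro: always_eventually\<close>)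
  hence "(\<lambda>N. (T (trunc N x) i - T x i) + T x i) \<longlonglongrightarrow> 0 + T x i"
    by (rule tendsto_add[OF _ tendsto_const])
  hence "(\<lambda>N. \<Sum>j<N. mT T i j * x j) \<longlonglongrightarrow> T x i"
    using T_trunc[OF assms(1) bo assms(3)] by (simp add: mT_def mult.commute)
  hence "(\<lambda>j. mT T i j * x j) sums T x i" unfolding sums_def .
  moreover have "(\<lambda>j. mT T i j * x j) sums opM (mT T) x i"
    unfolding opM_def by (rule sums_infsum[OF opM_row(1)[OF hs_mT(1)[OF assms(1,2)] xl]])
  ultimately show "T x i = opM (mT T) x i" using sums_unique2 by blast
qed

lemma limit_l2_bound:
  fixes A :: "nat \<Rightarrow> 'a \<Rightarrow> complex" and B :: "'a \<Rightarrow> complex"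
  assumes s: "\<And>p. (\<lambda>q. (cmod (A p q))^2) summable_on UNIV"
    and b: "\<And>p. infsum (\<lambda>q. (cmod (A p q))^2) UNIV \<le> m2"
    and c: "\<And>q. (\<lambda>p. A p q) \<longlonglongrightarrow> B q"
  shows "(\<lambda>q. (cmod (B q))^2) summable_on UNIV" "infsum (\<lambda>q. (cmod (B q))^2) UNIV \<le> m2"
proof -
  have fin: "sum (\<lambda>q. (cmod (B q))^2) F \<le> m2" if "finite F" for F
  proof -
    have "(\<lambda>p. sum (\<lambda>q. (cmod (A p q))^2) F) \<longlonglongrightarrow> sum (\<lambda>q. (cmod (B q))^2) F"
      by (intro tendsto_intros c)
    moreover have "sum (\<lambda>q. (cmod (A p q))^2) F \<le> m2" for p
      using finite_sum_le_infsum[OF s \<open>finite F\<close>, of p] b[of p] by simp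
    ultimately show ?thesis by (intro LIMSEQ_le_const2) auto
  qed
  show sB: "(\<lambda>q. (cmod (B q))^2) summable_on UNIV"
    by (rule nonneg_bdd_above_summable_on) (use fin in \<open>auto intro!: bdd_aboveI2\<close>)
  show "infsum (\<lambda>q. (cmod (B q))^2) UNIV \<le> m2"
    by (rule infsum_le_finite_sums[OF sB]) (use fin in auto)
qed

lemma tail_small:
  fixes z :: "'a \<Rightarrow> complex"
  assumes "(\<lambda>q. (cmod (z q))^2) summable_on UNIV" "d > 0"
  obtains F where "finite F" "infsum (\<lambda>q. if q \<in> F then 0 else (cmod (z q))^2) UNIV \<le> d"
proof -
  obtain F where F: "finite F" "dist (sum (\<lambda>q. (cmod (z q))^2) F) (infsum (\<lambda>q. (cmod (z q))^2) UNIV) \<le> d"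
    using infsum_finite_approximation[OF assms] by blast
  have h: "((\<lambda>q. if q \<in> F then (cmod (z q))^2 else 0) has_sum sum (\<lambda>q. (cmod (z q))^2) F) UNIV"
    using has_sum_finsupp(1)[OF F(1), of "\<lambda>q. if q \<in> F then (cmod (z q))^2 else 0"] by simp
  have "infsum (\<lambda>q. if q \<in> F then 0 else (cmod (z q))^2) UNIV
      = infsum (\<lambda>q. (cmod (z q))^2 - (if q \<in> F then (cmod (z q))^2 else 0)) UNIV"
    by (rule infsum_cong) auto
  also have "\<dots> = infsum (\<lambda>q. (cmod (z q))^2) UNIV - sum (\<lambda>q. (cmod (z q))^2) F"
    using infsum_diff[OF assms(1) has_sum_imp_summable[OF h]] infsumI[OF h] by simp
  also have "\<dots> \<le> d" using F(2) unfolding dist_real_def by linarith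
  finally show ?thesis using that F(1) by blast
qed

lemma weak_conv:
  fixes A :: "nat \<Rightarrow> 'a \<Rightarrow> complex" and B :: "'a \<Rightarrow> complex"
  assumes s: "\<And>p. (\<lambda>q. (cmod (A p q))^2) summable_on UNIV"
    and b: "\<And>p. infsum (\<lambda>q. (cmod (A p q))^2) UNIV \<le> m2"
    and c: "\<And>q. (\<lambda>p. A p q) \<longlonglongrightarrow> B q"
    and z: "(\<lambda>q. (cmod (z q))^2) summable_on UNIV"
  shows "(\<lambda>p. infsum (\<lambda>q. A p q * z q) UNIV) \<longlonglongrightarrow> infsum (\<lambda>q. B q * z q) UNIV"
proof -
  note sB = limit_l2_bound(1)[OF s b c] and bB = limit_l2_bound(2)[OF s b c]
  define D where "D p q = A p q - B q" for p q
  have m2: "m2 \<ge> 0" using b[of 0] infsum_nonneg[of UNIV "\<lambda>q. (cmod (A 0 q))^2"] by simp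
  have Dle: "(cmod (D p q))^2 \<le> 2 * (cmod (A p q))^2 + 2 * (cmod (B q))^2" for p q
  proof -
    have "cmod (D p q) \<le> cmod (A p q) + cmod (B q)" unfolding D_def by (rule norm_triangle_ineq4)
    hence "(cmod (D p q))^2 \<le> (cmod (A p q) + cmod (B q))^2" by (rule power_mono) simp
    also have "\<dots> \<le> 2 * (cmod (A p q))^2 + 2 * (cmod (B q))^2"
      using sum_squares_bound[of "cmod (A p q)" "cmod (B q)"] by (simp add: power2_eq_square algebra_simps)
    finally show ?thesis .
  qed
  have sAB: "(\<lambda>q. 2 * (cmod (A p q))^2 + 2 * (cmod (B q))^2) summable_on UNIV" for p
    by (intro summable_on_add summable_on_cmult_right s sB)
  have sD: "(\<lambda>q. (cmod (D p q))^2) summable_on UNIV" for p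
    by (rule summable_on_comparison_test[OF sAB]) (use Dle in auto)
  have bD: "infsum (\<lambda>q. (cmod (D p q))^2) UNIV \<le> 4 * m2" for p
  proof -
    have "infsum (\<lambda>q. (cmod (D p q))^2) UNIV \<le> infsum (\<lambda>q. 2 * (cmod (A p q))^2 + 2 * (cmod (B q))^2) UNIV"
      by (rule infsum_mono[OF sD sAB]) (rule Dle)
    also have "\<dots> = 2 * infsum (\<lambda>q. (cmod (A p q))^2) UNIV + 2 * infsum (\<lambda>q. (cmod (B q))^2) UNIV"
      using infsum_add[OF summable_on_cmult_right[OF s] summable_on_cmult_right[OF sB]]
        infsum_cmult_right[of 2 "\<lambda>q. (cmod (A p q))^2" UNIV] infsum_cmult_right[of 2 "\<lambda>q. (cmod (B q))^2" UNIV]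
        s sB by simp
    also have "\<dots> \<le> 4 * m2" using b[of p] bB by simp
    finally show ?thesis .
  qed
  have main: "(\<lambda>p. infsum (\<lambda>q. D p q * z q) UNIV) \<longlonglongrightarrow> 0"
  proof (rule tendstoI)
    fix e :: real assume e: "e > 0"
    define d where "d = e / (2 * (sqrt (4 * m2) + 1))"
    have "sqrt (4 * m2) \<ge> 0" using m2 by simp
    hence pos2: "2 * (sqrt (4 * m2) + 1) > 0" by (smt (verit))
    hence dpos: "d > 0" unfolding d_def using e by (intro divide_pos_pos)
    obtain F where F: "finite F" "infsum (\<lambda>q. if q \<in> F then 0 else (cmod (z q))^2) UNIV \<le> d^2"
      using tail_small[OF z, of "d^2"] dpos by auto
    have tail: "cmod (infsum (\<lambda>q. if q \<in> F then 0 else D p q * z q) UNIV) \<le> e / 2" for p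
    proof -
      have a1: "(\<lambda>q. (cmod (if q \<in> F then 0 else D p q))^2) summable_on UNIV"
        by (rule summable_on_comparison_test[OF sD]) auto
      have a2: "(\<lambda>q. (cmod (if q \<in> F then 0 else z q))^2) summable_on UNIV"
        by (rule summable_on_comparison_test[OF z]) auto
      have "(cmod (infsum (\<lambda>q. (if q \<in> F then 0 else D p q) * (if q \<in> F then 0 else z q)) UNIV))^2
          \<le> infsum (\<lambda>q. (cmod (if q \<in> F then 0 else D p q))^2) UNIV * infsum (\<lambda>q. (cmod (if q \<in> F then 0 else z q))^2) UNIV"
        by (rule CS_cx(3)[OF a1 a2])
      also have "\<dots> \<le> (4 * m2) * d^2"
      proof (rule mult_mono)
        show "infsum (\<lambda>q. (cmod (if q \<in> F then 0 else D p q))^2) UNIV \<le> 4 * m2"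
          using infsum_mono[OF a1 sD[of p]] bD[of p] by force
        show "infsum (\<lambda>q. (cmod (if q \<in> F then 0 else z q))^2) UNIV \<le> d^2"
        proof -
          have "(\<lambda>q. (cmod (if q \<in> F then 0 else z q))^2) = (\<lambda>q. if q \<in> F then 0 else (cmod (z q))^2)"
            by (rule ext) auto
          thus ?thesis using F(2) by simp
        qed
      qed (use m2 in \<open>auto intro: infsum_nonneg\<close>)
      also have "\<dots> = (sqrt (4 * m2) * d)^2" using m2 by (simp add: power_mult_distrib)
      finally have "cmod (infsum (\<lambda>q. (if q \<in> F then 0 else D p q) * (if q \<in> F then 0 else z q)) UNIV) \<le> sqrt (4 * m2) * d"
        by (rule power2_le_imp_le) (use m2 dpos in simp)
      also have "sqrt (4 * m2) * d \<le> e / 2"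
      proof -
        have "sqrt (4 * m2) * d \<le> (sqrt (4 * m2) + 1) * d" using dpos by (simp add: mult_right_mono)
        also have "\<dots> = e / 2" unfolding d_def using pos2 by (simp add: field_simps)
        finally show ?thesis .
      qed
      finally show ?thesis by (simp add: if_distrib cong: if_cong)
    qed
    have fconv: "(\<lambda>p. sum (\<lambda>q. D p q * z q) F) \<longlonglongrightarrow> sum (\<lambda>q. 0 * z q) F"
      unfolding D_def by (intro tendsto_intros LIM_zero c)
    hence "eventually (\<lambda>p. dist (sum (\<lambda>q. D p q * z q) F) 0 < e / 2) sequentially"
      using e by (intro tendstoD) auto
    thus "eventually (\<lambda>p. dist (infsum (\<lambda>q. D p q * z q) UNIV) 0 < e) sequentially"
    proof (rule eventually_mono)
      fix p assume fp: "dist (sum (\<lambda>q. D p q * z q) F) 0 < e / 2"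
      have sDz: "(\<lambda>q. D p q * z q) summable_on UNIV" using CS_cx(1)[OF sD z] .
      have h1: "((\<lambda>q. if q \<in> F then D p q * z q else 0) has_sum sum (\<lambda>q. D p q * z q) F) UNIV"
        using has_sum_finsupp(1)[OF F(1), of "\<lambda>q. if q \<in> F then D p q * z q else 0"] by simp
      have s2: "(\<lambda>q. if q \<in> F then 0 else D p q * z q) summable_on UNIV"
      proof -
        have "(\<lambda>q. D p q * z q - (if q \<in> F then D p q * z q else 0)) summable_on UNIV"
          by (rule summable_on_diff[OF sDz has_sum_imp_summable[OF h1]])
        thus ?thesis by (rule summable_on_cong[THEN iffD1, rotated]) auto
      qed
      have "infsum (\<lambda>q. D p q * z q) UNIV = infsum (\<lambda>q. (if q \<in> F then D p q * z q else 0) + (if q \<in> F then 0 else D p q * z q)) UNIV"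
        by (rule infsum_cong) auto
      also have "\<dots> = sum (\<lambda>q. D p q * z q) F + infsum (\<lambda>q. if q \<in> F then 0 else D p q * z q) UNIV"
        using infsum_add[OF has_sum_imp_summable[OF h1] s2] infsumI[OF h1] by simp
      finally have "cmod (infsum (\<lambda>q. D p q * z q) UNIV) \<le> cmod (sum (\<lambda>q. D p q * z q) F) + cmod (infsum (\<lambda>q. if q \<in> F then 0 else D p q * z q) UNIV)"
        by (simp add: norm_triangle_ineq)
      thus "dist (infsum (\<lambda>q. D p q * z q) UNIV) 0 < e" using fp tail[of p] by (simp add: dist_norm)
    qed
  qed
  have "infsum (\<lambda>q. D p q * z q) UNIV = infsum (\<lambda>q. A p q * z q) UNIV - infsum (\<lambda>q. B q * z q) UNIV" for p
  proof -
    have "infsum (\<lambda>q. D p q * z q) UNIV = infsum (\<lambda>q. A p q * z q - B q * z q) UNIV"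
      unfolding D_def by (simp add: algebra_simps)
    also have "\<dots> = infsum (\<lambda>q. A p q * z q) UNIV - infsum (\<lambda>q. B q * z q) UNIV"
      by (rule infsum_diff[OF CS_cx(1)[OF s z] CS_cx(1)[OF sB z]])
    finally show ?thesis .
  qed
  with main have "(\<lambda>p. infsum (\<lambda>q. A p q * z q) UNIV - infsum (\<lambda>q. B q * z q) UNIV) \<longlonglongrightarrow> 0" by simp
  thus ?thesis by (simp add: LIM_zero_iff)
qed

lemma frame_facts:
  assumes fr: "\<And>x. x \<in> l2 K \<Longrightarrow> summable (\<lambda>k. (cmod (l2_inner x (X k)))^2) \<and>
                  (\<Sum>k. (cmod (l2_inner x (X k)))^2) \<le> B * (l2_norm x)^2"
    and XK: "\<And>k. X k \<in> l2 K" and B: "B > 0" and K: "scalar_field K"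
  shows "nsq (X k) \<le> B" "summable (\<lambda>k. (cmod (X k j))^2)" "(\<Sum>k. (cmod (X k j))^2) \<le> B"
proof -
  have l: "l2s (X k)" using XK unfolding l2_mem by auto
  note f = fr[OF XK[of k]]
  have "(cmod (l2_inner (X k) (X k)))^2 \<le> (\<Sum>p. (cmod (l2_inner (X k) (X p)))^2)"
    using sum_le_suminf[OF conjunct1[OF f], of "{k}"] by simp
  also have "\<dots> \<le> B * nsq (X k)" using f l2_norm_sq[OF l] by simp
  finally have "(nsq (X k))^2 \<le> B * nsq (X k)" using l2_inner_self[OF l] nsq_nonneg[of "X k"] by simp
  thus "nsq (X k) \<le> B"
    using nsq_nonneg[of "X k"] B by (cases "nsq (X k) = 0") (auto simp: power2_eq_square)
  note g = fr[OF unit_vec_props(3)[OF K, of j]]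
  have e: "cmod (l2_inner (unit_vec j) (X k)) = cmod (X k j)" for k
    using inner_unit_vec[of "X k" j] XK unfolding l2_mem by simp
  show "summable (\<lambda>k. (cmod (X k j))^2)" using g unfolding e by simp
  show "(\<Sum>k. (cmod (X k j))^2) \<le> B" using g unfolding e unit_vec_props(4)[OF K] by simp
qed

definition Em :: "nat \<Rightarrow> nat \<Rightarrow> nat \<Rightarrow> nat \<Rightarrow> complex" where
  "Em j l = (\<lambda>a b. if (a = j \<and> b = l) \<or> (a = l \<and> b = j) then 1 else 0)"

lemma pair_finsupp:
  fixes g :: "nat \<times> nat \<Rightarrow> 'b::{topological_comm_monoid_add,t2_space}"
  assumes "j \<noteq> l" "\<And>a b. \<not> ((a = j \<and> b = l) \<or> (a = l \<and> b = j)) \<Longrightarrow> g (a,b) = 0"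
  shows "g summable_on UNIV" "infsum g UNIV = g (j,l) + g (l,j)"
proof -
  have h: "\<And>p. p \<notin> {(j,l),(l,j)} \<Longrightarrow> g p = 0" using assms(2) by auto
  show "g summable_on UNIV" using has_sum_finsupp(2)[of "{(j,l),(l,j)}" g] h by simp
  show "infsum g UNIV = g (j,l) + g (l,j)" using has_sum_finsupp(3)[of "{(j,l),(l,j)}" g] h assms(1) by simp
qed

lemma Em_props:
  assumes "j \<noteq> l"
  shows "hsumm (\<lambda>a b. c * Em j l a b)"
    "hsn (\<lambda>a b. c * Em j l a b) = 2 * (cmod c)^2"
    "adj (\<lambda>a b. complex_of_real r * Em j l a b) = (\<lambda>a b. complex_of_real r * Em j l a b)"
    "qf (Em j l) x x = x l * cnj (x j) + x j * cnj (x l)"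
proof -
  show "hsumm (\<lambda>a b. c * Em j l a b)" unfolding hsumm_def
    by (rule pair_finsupp(1)[OF assms]) (auto simp: Em_def)
  have "infsum (\<lambda>(a,b). (cmod (c * Em j l a b))^2) UNIV = (\<lambda>(a,b). (cmod (c * Em j l a b))^2) (j,l) + (\<lambda>(a,b). (cmod (c * Em j l a b))^2) (l,j)"
    by (rule pair_finsupp(2)[OF assms]) (auto simp: Em_def)
  thus "hsn (\<lambda>a b. c * Em j l a b) = 2 * (cmod c)^2" unfolding hsn_def by (simp add: Em_def)
  show "adj (\<lambda>a b. complex_of_real r * Em j l a b) = (\<lambda>a b. complex_of_real r * Em j l a b)"
    unfolding adj_def Em_def by (auto simp: fun_eq_iff)
  have "infsum (\<lambda>(a,b). Em j l a b * x b * cnj (x a)) UNIV = (\<lambda>(a,b). Em j l a b * x b * cnj (x a)) (j,l) + (\<lambda>(a,b). Em j l a b * x b * cnj (x a)) (l,j)"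
    by (rule pair_finsupp(2)[OF assms]) (auto simp: Em_def)
  thus "qf (Em j l) x x = x l * cnj (x j) + x j * cnj (x l)" unfolding qf_def using assms by (simp add: Em_def)
qed

lemma Kmat_Em: "scalar_field K \<Longrightarrow> c \<in> K \<Longrightarrow> Kmat K (\<lambda>a b. c * Em j l a b)"
  unfolding Kmat_def Em_def using K_ops by auto

definition phi :: "(nat \<Rightarrow> nat \<Rightarrow> complex) \<Rightarrow> nat \<Rightarrow> nat \<Rightarrow> nat \<Rightarrow> real" where
  "phi X j l k = Re (qf (Em j l) (X k) (X k))"

lemma phi_bound:
  assumes "j \<noteq> l"
  shows "(phi X j l k)^2 \<le> 4 * (cmod (X k j))^2 * (cmod (X k l))^2"
proof -
  have "\<bar>phi X j l k\<bar> \<le> cmod (qf (Em j l) (X k) (X k))" unfolding phi_def by (rule abs_Re_le_cmod)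
  also have "\<dots> \<le> cmod (X k l * cnj (X k j)) + cmod (X k j * cnj (X k l))"
    unfolding Em_props(4)[OF assms] by (rule norm_triangle_ineq)
  also have "\<dots> = 2 * (cmod (X k j) * cmod (X k l))" by (simp add: norm_mult)
  finally have "(phi X j l k)^2 \<le> (2 * (cmod (X k j) * cmod (X k l)))^2"
    using power_mono[of "\<bar>phi X j l k\<bar>"] by (metis abs_ge_zero power2_abs)
  thus ?thesis by (simp add: power_mult_distrib)
qed

lemma phi_summable:
  assumes fr: "\<And>x. x \<in> l2 K \<Longrightarrow> summable (\<lambda>k. (cmod (l2_inner x (X k)))^2) \<and>
                  (\<Sum>k. (cmod (l2_inner x (X k)))^2) \<le> B * (l2_norm x)^2"
    and XK: "\<And>k. X k \<in> l2 K" and B: "B > 0" and K: "scalar_field K" and jl: "j \<noteq> l"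
  shows "summable (\<lambda>k. (phi X j l k)^2)"
proof (rule summable_comparison_test')
  show "summable (\<lambda>k. 4 * B * (cmod (X k j))^2)"
    by (rule summable_mult[OF frame_facts(2)[OF fr XK B K]])
  fix k
  have "(cmod (X k l))^2 \<le> B"
    using coord_le[of "X k" l] frame_facts(1)[OF fr XK B K, of k] XK[of k] unfolding l2_mem by auto
  hence "4 * (cmod (X k j))^2 * (cmod (X k l))^2 \<le> 4 * (cmod (X k j))^2 * B"
    by (intro mult_left_mono) auto
  thus "norm ((phi X j l k)^2) \<le> 4 * B * (cmod (X k j))^2"
    using phi_bound[OF jl, of X k] by (simp add: algebra_simps)
qed

lemma small_pair:
  assumes fr: "\<And>x. x \<in> l2 K \<Longrightarrow> summable (\<lambda>k. (cmod (l2_inner x (X k)))^2) \<and>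
                  (\<Sum>k. (cmod (l2_inner x (X k)))^2) \<le> B * (l2_norm x)^2"
    and XK: "\<And>k. X k \<in> l2 K" and B: "B > 0" and K: "scalar_field K" and eps: "eps > 0"
  shows "\<exists>j l. j \<noteq> l \<and> (\<Sum>k. (phi X j l k)^2) \<le> eps"
proof (rule ccontr)
  assume na: "\<not> ?thesis"
  define s :: nat where "s = nat (ceiling (4 * B^2 / eps)) + 1"
  have s1: "s \<ge> 1" unfolding s_def by simp
  have "real s > 4 * B^2 / eps" unfolding s_def by linarith
  hence es: "eps * real s > 4 * B^2" using eps by (simp add: field_simps)
  define P where "P = {..<s} \<times> {s ..< 2 * s}"
  have Pfin: "finite P" unfolding P_def by simp
  have "(0, s) \<in> P" unfolding P_def using s1 by auto
  hence Pne: "P \<noteq> {}" by auto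
  have Pcard: "card P = s * s" unfolding P_def by (simp add: card_cartesian_product)
  have jl: "fst p \<noteq> snd p" if "p \<in> P" for p using that unfolding P_def by auto
  define a where "a k j = (cmod (X k j))^2" for k j
  have big: "eps < (\<Sum>k. (phi X (fst p) (snd p) k)^2)" if "p \<in> P" for p
    using na jl[OF that] by (metis not_le prod.collapse)
  have "eps * real (card P) = (\<Sum>p\<in>P. eps)" by simp
  also have "\<dots> < (\<Sum>p\<in>P. (\<Sum>k. (phi X (fst p) (snd p) k)^2))"
    by (rule sum_strict_mono[OF Pfin Pne big])
  also have "\<dots> = (\<Sum>k. \<Sum>p\<in>P. (phi X (fst p) (snd p) k)^2)"
    by (rule suminf_sum[symmetric]) (rule phi_summable[OF fr XK B K jl])
  also have "\<dots> \<le> (\<Sum>k. 4 * B * (\<Sum>j<s. a k j))"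
  proof (rule suminf_le)
    show "summable (\<lambda>k. \<Sum>p\<in>P. (phi X (fst p) (snd p) k)^2)"
      by (rule summable_sum) (rule phi_summable[OF fr XK B K jl])
    show "summable (\<lambda>k. 4 * B * (\<Sum>j<s. a k j))"
      unfolding a_def by (intro summable_mult summable_sum frame_facts(2)[OF fr XK B K])
    fix k
    have "(\<Sum>p\<in>P. (phi X (fst p) (snd p) k)^2) \<le> (\<Sum>p\<in>P. 4 * (a k (fst p) * a k (snd p)))"
      by (rule sum_mono) (use phi_bound jl in \<open>auto simp: a_def mult.assoc\<close>)
    also have "\<dots> = 4 * ((\<Sum>j<s. a k j) * (\<Sum>l\<in>{s ..< 2 * s}. a k l))"
    proof -
      have "(\<Sum>p\<in>P. a k (fst p) * a k (snd p)) = (\<Sum>j<s. \<Sum>l\<in>{s ..< 2 * s}. a k j * a k l)"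
        unfolding P_def by (simp add: sum.cartesian_product case_prod_unfold)
      also have "\<dots> = (\<Sum>j<s. a k j) * (\<Sum>l\<in>{s ..< 2 * s}. a k l)"
        by (simp add: sum_product)
      finally have "(\<Sum>p\<in>P. a k (fst p) * a k (snd p)) = (\<Sum>j<s. a k j) * (\<Sum>l\<in>{s ..< 2 * s}. a k l)" .
      moreover have "(\<Sum>p\<in>P. 4 * (a k (fst p) * a k (snd p))) = 4 * (\<Sum>p\<in>P. a k (fst p) * a k (snd p))"
        by (rule sum_distrib_left[symmetric])
      ultimately show ?thesis by simp
    qed
    also have "\<dots> \<le> 4 * ((\<Sum>j<s. a k j) * B)"
    proof -
      have "(\<Sum>l\<in>{s ..< 2 * s}. a k l) \<le> nsq (X k)"
        unfolding a_def nsq_def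
        by (rule finite_sum_le_infsum) (use XK[of k] in \<open>auto simp: l2_mem\<close>)
      also have "\<dots> \<le> B" by (rule frame_facts(1)[OF fr XK B K])
      finally show ?thesis by (intro mult_left_mono) (auto simp: a_def intro: sum_nonneg)
    qed
    finally show "(\<Sum>p\<in>P. (phi X (fst p) (snd p) k)^2) \<le> 4 * B * (\<Sum>j<s. a k j)" by (simp add: algebra_simps)
  qed
  also have "\<dots> = 4 * B * (\<Sum>j<s. \<Sum>k. a k j)"
    using suminf_mult[of "\<lambda>k. \<Sum>j<s. a k j" "4 * B"] suminf_sum[of "{..<s}" "\<lambda>j k. a k j"]
      summable_sum[of "{..<s}" "\<lambda>j k. a k j"] frame_facts(2)[OF fr XK B K] unfolding a_def by simp
  also have "\<dots> \<le> 4 * B * (\<Sum>j<s. B)"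
    by (intro mult_left_mono sum_mono) (use frame_facts(3)[OF fr XK B K] B in \<open>auto simp: a_def\<close>)
  also have "\<dots> = 4 * B^2 * real s" by (simp add: power2_eq_square)
  finally have "eps * real s * real s < 4 * B^2 * real s" unfolding Pcard by simp
  hence "eps * real s < 4 * B^2" using s1 by simp
  thus False using es by simp
qed

lemma diag_conv:
  fixes M :: "nat \<Rightarrow> nat \<Rightarrow> nat \<Rightarrow> complex"
  assumes bnd: "\<And>p i j. cmod (M p i j) \<le> R"
  obtains r where "strict_mono r" "\<And>i j. convergent (\<lambda>p. M (r p) i j)"
proof -
  define P where "P n s \<longleftrightarrow> convergent (\<lambda>p. M (s p) (fst (prod_decode n)) (snd (prod_decode n)))" for n s
  interpret subseqs P
  proof
    fix n and s :: "nat \<Rightarrow> nat" assume "strict_mono s"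
    define f where "f p = M (s p) (fst (prod_decode n)) (snd (prod_decode n))" for p
    have "bounded (range f)" unfolding f_def bounded_iff using bnd by blast
    then obtain l r' where "strict_mono r'" "(f \<circ> r') \<longlonglongrightarrow> l"
      using bounded_imp_convergent_subsequence by blast
    thus "\<exists>r'. strict_mono r' \<and> P n (s \<circ> r')"
      unfolding P_def f_def convergent_def by (auto simp: o_def)
  qed
  have stab: "P n (s \<circ> r)" if "strict_mono r" "P n s" for r s n
    using that unfolding P_def convergent_def
    using LIMSEQ_subseq_LIMSEQ by (fastforce simp: o_def)
  have "convergent (\<lambda>p. M (diagseq p) i j)" for i j
  proof -
    let ?k = "prod_encode (i,j)"
    have "P ?k (diagseq \<circ> (+) (Suc ?k))" by (rule diagseq_holds) (rule stab)
    hence "convergent (\<lambda>p. M (diagseq (p + Suc ?k)) i j)"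
      unfolding P_def by (simp add: o_def add.commute)
    then obtain L where "(\<lambda>p. M (diagseq (p + Suc ?k)) i j) \<longlonglongrightarrow> L" unfolding convergent_def by blast
    hence "(\<lambda>p. M (diagseq p) i j) \<longlonglongrightarrow> L" by (rule LIMSEQ_offset[where f="\<lambda>p. M (diagseq p) i j"])
    thus ?thesis unfolding convergent_def by blast
  qed
  thus ?thesis using that subseq_diagseq by blast
qed

lemma lincomb:
  assumes "hsumm N" "hsumm N'"
  shows "hsumm (\<lambda>i j. \<alpha> * N i j + \<beta> * N' i j)"
    and "hsn (\<lambda>i j. \<alpha> * N i j + \<beta> * N' i j) \<le> 2 * (cmod \<alpha>)^2 * hsn N + 2 * (cmod \<beta>)^2 * hsn N'"
    and "l2s x \<Longrightarrow> l2s y \<Longrightarrow> qf (\<lambda>i j. \<alpha> * N i j + \<beta> * N' i j) x y = \<alpha> * qf N x y + \<beta> * qf N' x y"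
proof -
  have sN: "(\<lambda>(i,j). (cmod (N i j))^2) summable_on UNIV" and sN': "(\<lambda>(i,j). (cmod (N' i j))^2) summable_on UNIV"
    using assms unfolding hsumm_def by auto
  have le: "(cmod (\<alpha> * N i j + \<beta> * N' i j))^2 \<le> 2 * (cmod \<alpha>)^2 * (cmod (N i j))^2 + 2 * (cmod \<beta>)^2 * (cmod (N' i j))^2" for i j
  proof -
    have "cmod (\<alpha> * N i j + \<beta> * N' i j) \<le> cmod \<alpha> * cmod (N i j) + cmod \<beta> * cmod (N' i j)"
      using norm_triangle_ineq[of "\<alpha> * N i j" "\<beta> * N' i j"] by (simp add: norm_mult)
    hence "(cmod (\<alpha> * N i j + \<beta> * N' i j))^2 \<le> (cmod \<alpha> * cmod (N i j) + cmod \<beta> * cmod (N' i j))^2"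
      by (rule power_mono) simp
    also have "\<dots> \<le> 2 * (cmod \<alpha>)^2 * (cmod (N i j))^2 + 2 * (cmod \<beta>)^2 * (cmod (N' i j))^2"
      using sum_squares_bound[of "cmod \<alpha> * cmod (N i j)" "cmod \<beta> * cmod (N' i j)"]
      by (simp add: power2_eq_square algebra_simps)
    finally show ?thesis .
  qed
  have sR: "(\<lambda>(i,j). 2 * (cmod \<alpha>)^2 * (cmod (N i j))^2 + 2 * (cmod \<beta>)^2 * (cmod (N' i j))^2) summable_on UNIV"
    using summable_on_add[OF summable_on_cmult_right[OF sN, of "2 * (cmod \<alpha>)^2"] summable_on_cmult_right[OF sN', of "2 * (cmod \<beta>)^2"]]
    by (simp add: case_prod_unfold)
  have sL: "(\<lambda>(i,j). (cmod (\<alpha> * N i j + \<beta> * N' i j))^2) summable_on UNIV"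
    by (rule summable_on_comparison_test[OF sR]) (use le in auto)
  thus "hsumm (\<lambda>i j. \<alpha> * N i j + \<beta> * N' i j)" unfolding hsumm_def by simp
  have "hsn (\<lambda>i j. \<alpha> * N i j + \<beta> * N' i j) \<le> infsum (\<lambda>(i,j). 2 * (cmod \<alpha>)^2 * (cmod (N i j))^2 + 2 * (cmod \<beta>)^2 * (cmod (N' i j))^2) UNIV"
    unfolding hsn_def by (rule infsum_mono[OF sL sR]) (use le in auto)
  also have "\<dots> = infsum (\<lambda>p. 2 * (cmod \<alpha>)^2 * (\<lambda>(i,j). (cmod (N i j))^2) p + 2 * (cmod \<beta>)^2 * (\<lambda>(i,j). (cmod (N' i j))^2) p) UNIV"
    by (simp add: case_prod_unfold)
  also have "\<dots> = 2 * (cmod \<alpha>)^2 * hsn N + 2 * (cmod \<beta>)^2 * hsn N'"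
    unfolding hsn_def
    using infsum_add[OF summable_on_cmult_right[OF sN, of "2 * (cmod \<alpha>)^2"] summable_on_cmult_right[OF sN', of "2 * (cmod \<beta>)^2"]]
      infsum_cmult_right[of "2 * (cmod \<alpha>)^2" "\<lambda>(i,j). (cmod (N i j))^2" UNIV]
      infsum_cmult_right[of "2 * (cmod \<beta>)^2" "\<lambda>(i,j). (cmod (N' i j))^2" UNIV] sN sN'
    by simp
  finally show "hsn (\<lambda>i j. \<alpha> * N i j + \<beta> * N' i j) \<le> 2 * (cmod \<alpha>)^2 * hsn N + 2 * (cmod \<beta>)^2 * hsn N'" .
  assume x: "l2s x" and y: "l2s y"
  have q1: "(\<lambda>(i,j). N i j * x j * cnj (y i)) summable_on UNIV" by (rule qf_summable(1)[OF assms(1) x y])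
  have q2: "(\<lambda>(i,j). N' i j * x j * cnj (y i)) summable_on UNIV" by (rule qf_summable(1)[OF assms(2) x y])
  have "qf (\<lambda>i j. \<alpha> * N i j + \<beta> * N' i j) x y = infsum (\<lambda>p. \<alpha> * (\<lambda>(i,j). N i j * x j * cnj (y i)) p + \<beta> * (\<lambda>(i,j). N' i j * x j * cnj (y i)) p) UNIV"
    unfolding qf_def by (rule infsum_cong) (auto simp: algebra_simps)
  also have "\<dots> = \<alpha> * qf N x y + \<beta> * qf N' x y"
    unfolding qf_def
    using infsum_add[OF summable_on_cmult_right[OF q1, of \<alpha>] summable_on_cmult_right[OF q2, of \<beta>]]
      infsum_cmult_right[of \<alpha> "\<lambda>(i,j). N i j * x j * cnj (y i)" UNIV]
      infsum_cmult_right[of \<beta> "\<lambda>(i,j). N' i j * x j * cnj (y i)" UNIV] q1 q2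
    by simp
  finally show "qf (\<lambda>i j. \<alpha> * N i j + \<beta> * N' i j) x y = \<alpha> * qf N x y + \<beta> * qf N' x y" .
qed

lemma coord_tendsto:
  fixes c :: "nat \<Rightarrow> nat \<Rightarrow> real"
  assumes "c \<longlonglongrightarrow> c0"
  shows "(\<lambda>p. c p n) \<longlonglongrightarrow> c0 n"
  using continuous_on_tendsto_compose[OF continuous_on_product_coordinates[of n] assms] by simp

definition clmp :: "real \<Rightarrow> real" where "clmp r = max (-1) (min 1 r)"

lemma clmp_abs: "\<bar>clmp r\<bar> \<le> 1" unfolding clmp_def by auto

lemma clmp_cont: "isCont clmp r" unfolding clmp_def by (intro continuous_intros)

definition ac :: "(nat \<Rightarrow> nat \<Rightarrow> real) \<Rightarrow> (nat \<Rightarrow> real) \<Rightarrow> nat \<Rightarrow> real" where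
  "ac ph c k = (\<Sum>n. clmp (c n) * 2^n * ph n k)"

locale phfam =
  fixes ph :: "nat \<Rightarrow> nat \<Rightarrow> real"
  assumes phs: "\<And>n. summable (\<lambda>k. (ph n k)^2)"
    and phb: "\<And>n. (\<Sum>k. (ph n k)^2) \<le> (1/64)^n"
begin

lemma ph_pt: "\<bar>ph n k\<bar> \<le> (1/8)^n"
proof -
  have "(ph n k)^2 \<le> (\<Sum>k. (ph n k)^2)"
    using sum_le_suminf[OF phs[of n], of "{k}"] by simp
  also have "\<dots> \<le> (1/64)^n" by (rule phb)
  also have "\<dots> = ((1/8)^n)^2"
  proof -
    have "(1/64::real)^n = ((1/8) * (1/8))^n" by simp
    thus ?thesis by (simp only: power_mult_distrib power2_eq_square)
  qed
  finally show ?thesis using abs_le_square_iff[of "ph n k" "(1/8)^n"] by simp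
qed

lemma term_bound: "\<bar>clmp (c n) * 2^n * ph n k\<bar> \<le> (1/4)^n"
proof -
  have "\<bar>clmp (c n) * 2^n * ph n k\<bar> = \<bar>clmp (c n)\<bar> * 2^n * \<bar>ph n k\<bar>" by (simp add: abs_mult)
  also have "\<dots> \<le> 1 * 2^n * (1/8)^n"
    by (intro mult_mono clmp_abs ph_pt) auto
  also have "\<dots> = (1/4)^n" by (simp add: power_divide[symmetric] power_mult_distrib[symmetric] flip: power_mult_distrib)
  finally show ?thesis .
qed

lemma term_summable: "summable (\<lambda>n. clmp (c n) * 2^n * ph n k)"
  by (rule summable_comparison_test'[of "\<lambda>n. (1/4::real)^n"]) (use term_bound in \<open>auto intro: summable_geometric\<close>)

lemma ac_cont:
  assumes "cs \<longlonglongrightarrow> c0"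
  shows "(\<lambda>p. ac ph (cs p) k) \<longlonglongrightarrow> ac ph c0 k"
proof -
  have lim: "(\<lambda>p. clmp (cs p n) * 2^n * ph n k) \<longlonglongrightarrow> clmp (c0 n) * 2^n * ph n k" for n
  proof -
    have "(\<lambda>p. cs p n) \<longlonglongrightarrow> c0 n" by (rule coord_tendsto[OF assms])
    hence "(\<lambda>p. clmp (cs p n)) \<longlonglongrightarrow> clmp (c0 n)" by (rule isCont_tendsto_compose[OF clmp_cont])
    thus ?thesis by (intro tendsto_mult_right)
  qed
  have "eventually (\<lambda>p. summable (\<lambda>n. norm (clmp (cs p n) * 2^n * ph n k))) sequentially \<and>
        summable (\<lambda>n. norm (clmp (c0 n) * 2^n * ph n k)) \<and>
        ((\<lambda>p. suminf (\<lambda>n. clmp (cs p n) * 2^n * ph n k)) \<longlongrightarrow> suminf (\<lambda>n. clmp (c0 n) * 2^n * ph n k)) sequentially"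
    by (rule tannerys_theorem[where M="\<lambda>n. (1/4)^n"])
       (use lim term_bound in \<open>auto intro: always_eventually summable_geometric\<close>)
  thus ?thesis unfolding ac_def by blast
qed

lemma ac_diff:
  "ac ph (c(n := 1)) k - ac ph (c(n := -1)) k = 2 * 2^n * ph n k"
proof -
  have "ac ph (c(n := 1)) k - ac ph (c(n := -1)) k
      = (\<Sum>p. clmp ((c(n := 1)) p) * 2^p * ph p k - clmp ((c(n := -1)) p) * 2^p * ph p k)"
    unfolding ac_def by (rule suminf_diff[OF term_summable term_summable])
  also have "\<dots> = (\<Sum>p. if p = n then 2 * 2^n * ph n k else 0)"
    by (rule suminf_cong) (auto simp: clmp_def)
  also have "\<dots> = 2 * 2^n * ph n k"
  proof -
    have "(\<lambda>p. if p = n then 2 * 2^n * ph n k else 0) sums (2 * 2^n * ph n k)"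
      using sums_single[of n "\<lambda>p. 2 * 2^n * ph n k"] by simp
    thus ?thesis by (rule sums_unique[symmetric])
  qed
  finally show ?thesis .
qed

lemma ac_l2: "summable (\<lambda>k. (ac ph c k)^2)"
proof -
  define h where "h k n = 16^n * (ph n k)^2" for k n
  have hnn: "h k n \<ge> 0" for k n unfolding h_def by simp
  have hrow: "((\<lambda>k. h k n) has_sum (16^n * (\<Sum>k. (ph n k)^2))) UNIV" for n
  proof -
    have "(\<lambda>k. h k n) sums (16^n * (\<Sum>k. (ph n k)^2))"
      unfolding h_def by (rule sums_mult[OF summable_sums[OF phs]])
    thus ?thesis by (rule sums_nonneg_imp_has_sum_strong) (simp add: hnn)
  qed
  have gsum: "(\<lambda>n. 16^n * (\<Sum>k. (ph n k)^2)) summable_on UNIV"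
  proof -
    have "summable (\<lambda>n. 16^n * (\<Sum>k. (ph n k)^2))"
    proof (rule summable_comparison_test'[of "\<lambda>n. (1/4::real)^n"])
      show "summable (\<lambda>n. (1/4::real)^n)" by (rule summable_geometric) simp
      fix n
      have "16^n * (\<Sum>k. (ph n k)^2) \<le> 16^n * (1/64)^n" by (intro mult_left_mono phb) simp
      also have "\<dots> = (1/4)^n" by (simp add: power_divide[symmetric] flip: power_mult_distrib)
      finally show "norm (16^n * (\<Sum>k. (ph n k)^2)) \<le> (1/4::real)^n"
        using suminf_nonneg[OF phs[of n]] by simp
    qed
    thus ?thesis by (subst summable_on_UNIV_nonneg_real_iff) (auto intro!: mult_nonneg_nonneg suminf_nonneg phs)
  qed
  have "(\<lambda>p. h (snd p) (fst p)) summable_on Sigma UNIV (\<lambda>_. UNIV)"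
    by (rule summable_on_SigmaI[OF _ gsum]) (use hrow hnn in auto)
  hence s1: "(\<lambda>(k,n). h k n) summable_on UNIV"
    using summable_swap2[of "\<lambda>n k. h k n"] by (simp add: case_prod_unfold)
  have rowk: "(\<lambda>n. h k n) summable_on UNIV" for k
    using summable_on_SigmaD1[of "\<lambda>k n. h k n" UNIV "\<lambda>_. UNIV" k] s1 by simp
  have Hs: "(\<lambda>k. infsum (\<lambda>n. h k n) UNIV) summable_on UNIV"
    using summable_on_SigmaD[of "\<lambda>(k,n). h k n" UNIV "\<lambda>_. UNIV"] s1 rowk by simp
  have bnd: "(ac ph c k)^2 \<le> (4/3) * infsum (\<lambda>n. h k n) UNIV" for k
  proof -
    define f where "f n = (1/2::real)^n" for n
    define g where "g n = 4^n * \<bar>ph n k\<bar>" for n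
    have f2e: "(\<lambda>n. (f n)^2) = (\<lambda>n. (1/4::real)^n)"
    proof
      fix n
      have "(1/4::real)^n = ((1/2)*(1/2))^n" by simp
      thus "(f n)^2 = (1/4::real)^n" unfolding f_def by (simp only: power_mult_distrib power2_eq_square)
    qed
    have f2: "(\<lambda>n. (f n)^2) summable_on UNIV"
    proof -
      have "summable (\<lambda>n. (f n)^2)" unfolding f2e by (rule summable_geometric) simp
      thus ?thesis by (subst summable_on_UNIV_nonneg_real_iff) auto
    qed
    have f2v: "infsum (\<lambda>n. (f n)^2) UNIV = 4/3"
    proof -
      note f2e
      hence "(\<lambda>n. (f n)^2) sums (1 / (1 - 1/4))" using geometric_sums[of "1/4::real"] by simp
      thus ?thesis using suminf_infsum[OF f2] sums_unique by fastforce
    qed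
    have g2e: "(g n)^2 = h k n" for n
    proof -
      have "(16::real)^n = (4*4)^n" by simp
      hence "(16::real)^n = 4^n * 4^n" by (simp only: power_mult_distrib)
      thus ?thesis unfolding g_def h_def by (simp add: power_mult_distrib power2_eq_square)
    qed
    have g2: "(\<lambda>n. (g n)^2) summable_on UNIV" unfolding g2e by (rule rowk)
    note cs = CS_real[OF f2 g2]
    have fg: "f n * g n = 2^n * \<bar>ph n k\<bar>" for n
      unfolding f_def g_def by (simp add: power_mult_distrib[symmetric] flip: power_mult_distrib mult.assoc)
    have "\<bar>ac ph c k\<bar> \<le> (\<Sum>n. \<bar>clmp (c n) * 2^n * ph n k\<bar>)"
      unfolding ac_def
      by (rule summable_rabs) (rule summable_comparison_test'[of "\<lambda>n. (1/4::real)^n"], auto intro: summable_geometric term_bound)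
    also have "\<dots> \<le> (\<Sum>n. f n * g n)"
    proof (rule suminf_le)
      fix n show "\<bar>clmp (c n) * 2^n * ph n k\<bar> \<le> f n * g n"
        unfolding fg using clmp_abs[of "c n"] by (simp add: abs_mult mult_left_le_one_le)
      show "summable (\<lambda>n. \<bar>clmp (c n) * 2^n * ph n k\<bar>)"
        by (rule summable_comparison_test'[of "\<lambda>n. (1/4::real)^n"]) (auto intro: summable_geometric term_bound)
      show "summable (\<lambda>n. f n * g n)" using summable_on_imp_summable[OF cs(1)] .
    qed
    also have "\<dots> = infsum (\<lambda>n. f n * g n) UNIV" by (rule suminf_infsum[OF cs(1)])
    finally have le1: "\<bar>ac ph c k\<bar> \<le> infsum (\<lambda>n. f n * g n) UNIV" .
    hence "(ac ph c k)^2 \<le> (infsum (\<lambda>n. f n * g n) UNIV)^2"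
      using abs_le_square_iff[of "ac ph c k" "infsum (\<lambda>n. f n * g n) UNIV"] by simp
    also have "\<dots> \<le> infsum (\<lambda>n. (f n)^2) UNIV * infsum (\<lambda>n. (g n)^2) UNIV" by (rule cs(2))
    also have "\<dots> = (4/3) * infsum (\<lambda>n. h k n) UNIV" unfolding f2v g2e ..
    finally show ?thesis .
  qed
  have "(\<lambda>k. (ac ph c k)^2) summable_on UNIV"
    by (rule summable_on_comparison_test[OF summable_on_cmult_right[OF Hs, of "4/3"]]) (use bnd in auto)
  thus ?thesis by (subst summable_on_UNIV_nonneg_real_iff[symmetric]) auto
qed

end

lemma qf_pairs:
  "qf M x x = infsum (\<lambda>q. M (fst q) (snd q) * (x (snd q) * cnj (x (fst q)))) UNIV"
  unfolding qf_def by (simp add: case_prod_unfold mult.assoc)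

lemma pair_l2:
  assumes "l2s x"
  shows "(\<lambda>q. (cmod (x (snd q) * cnj (x (fst q))))^2) summable_on UNIV"
  using pair_summable[OF assms assms] by (simp add: case_prod_unfold)

lemma hsumm_pairs: "hsumm M \<longleftrightarrow> (\<lambda>q. (cmod (M (fst q) (snd q)))^2) summable_on UNIV"
  unfolding hsumm_def by (simp add: case_prod_unfold)

lemma hsn_pairs: "hsn M = infsum (\<lambda>q. (cmod (M (fst q) (snd q)))^2) UNIV"
  unfolding hsn_def by (simp add: case_prod_unfold)

lemma entry_le_hsn:
  assumes "hsumm M"
  shows "(cmod (M i j))^2 \<le> hsn M"
proof -
  have "sum (\<lambda>(i,j). (cmod (M i j))^2) {(i,j)} \<le> infsum (\<lambda>(i,j). (cmod (M i j))^2) UNIV"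
    by (rule finite_sum_le_infsum) (use assms in \<open>auto simp: hsumm_def\<close>)
  thus ?thesis unfolding hsn_def by simp
qed

lemma Kmat_limit:
  assumes "scalar_field K" "\<And>p. f p \<in> K" "f \<longlonglongrightarrow> l"
  shows "l \<in> K"
proof (cases "K = UNIV")
  case False
  hence K: "K = \<real>" using assms(1) unfolding scalar_field_def by auto
  show ?thesis using closed_sequentially[OF closed_complex_Reals, of f l] assms(2,3) K by auto
qed simp

definition FF :: "complex set \<Rightarrow> (nat \<Rightarrow> nat \<Rightarrow> complex) \<Rightarrow> (nat \<Rightarrow> nat \<Rightarrow> real) \<Rightarrow> nat \<Rightarrow> (nat \<Rightarrow> real) set" where
  "FF K X ph m = {c. \<exists>M. hsumm M \<and> adj M = M \<and> Kmat K M \<and> hsn M \<le> real m \<and>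
                     (\<forall>k. qf M (X k) (X k) = complex_of_real (ac ph c k))}"

lemma FF_closed:
  assumes K: "scalar_field K" and Xl: "\<And>k. l2s (X k)" and ph: "phfam ph"
  shows "closed (FF K X ph m)"
  unfolding closed_sequential_limits
proof (intro allI impI)
  fix cs c0 assume a: "(\<forall>p. cs p \<in> FF K X ph m) \<and> cs \<longlonglongrightarrow> c0"
  hence "\<forall>p. \<exists>M. hsumm M \<and> adj M = M \<and> Kmat K M \<and> hsn M \<le> real m \<and>
                     (\<forall>k. qf M (X k) (X k) = complex_of_real (ac ph (cs p) k))"
    unfolding FF_def by blast
  from choice[OF this] obtain Ms where Ms0: "\<forall>p. hsumm (Ms p) \<and> adj (Ms p) = Ms p \<and> Kmat K (Ms p) \<and> hsn (Ms p) \<le> real m \<and>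
                     (\<forall>k. qf (Ms p) (X k) (X k) = complex_of_real (ac ph (cs p) k))" by blast
  have Ms: "\<And>p. hsumm (Ms p)" "\<And>p. adj (Ms p) = Ms p" "\<And>p. Kmat K (Ms p)"
    "\<And>p. hsn (Ms p) \<le> real m" "\<And>p k. qf (Ms p) (X k) (X k) = complex_of_real (ac ph (cs p) k)"
    using Ms0 by auto
  have bnd: "cmod (Ms p i j) \<le> sqrt (real m)" for p i j
    using entry_le_hsn[OF Ms(1), of p i j] Ms(4)[of p] real_le_rsqrt by force
  have "\<exists>r. strict_mono r \<and> (\<forall>i j. convergent (\<lambda>p. Ms (r p) i j))"
  proof (rule diag_conv[of Ms "sqrt (real m)", OF bnd])
    fix r assume "strict_mono r" "\<And>i j. convergent (\<lambda>p. Ms (r p) i j)"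
    thus "\<exists>r. strict_mono r \<and> (\<forall>i j. convergent (\<lambda>p. Ms (r p) i j))" by blast
  qed
  then obtain r where r: "strict_mono r" "\<And>i j. convergent (\<lambda>p. Ms (r p) i j)" by blast
  define L where "L i j = lim (\<lambda>p. Ms (r p) i j)" for i j
  have Lt: "(\<lambda>p. Ms (r p) i j) \<longlonglongrightarrow> L i j" for i j
    using r(2)[of i j] by (simp add: L_def convergent_LIMSEQ_iff)
  define A where "A p q = Ms (r p) (fst q) (snd q)" for p and q :: "nat \<times> nat"
  have As: "(\<lambda>q. (cmod (A p q))^2) summable_on UNIV" for p
    using Ms(1)[of "r p"] unfolding A_def hsumm_pairs .
  have Ab: "infsum (\<lambda>q. (cmod (A p q))^2) UNIV \<le> real m" for p
    using Ms(4)[of "r p"] unfolding A_def hsn_pairs .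
  have Ac: "(\<lambda>p. A p q) \<longlonglongrightarrow> L (fst q) (snd q)" for q
    unfolding A_def by (rule Lt)
  have hL: "hsumm L" unfolding hsumm_pairs using limit_l2_bound(1)[OF As Ab Ac] .
  have nL: "hsn L \<le> real m" unfolding hsn_pairs using limit_l2_bound(2)[OF As Ab Ac] .
  have aL: "adj L = L"
  proof (intro ext)
    fix i j
    have "(\<lambda>p. cnj (Ms (r p) j i)) \<longlonglongrightarrow> cnj (L j i)" by (intro tendsto_cnj Lt)
    moreover have "cnj (Ms (r p) j i) = Ms (r p) i j" for p
      using fun_cong[OF fun_cong[OF Ms(2)[of "r p"]], of i j] unfolding adj_def by simp
    ultimately have "(\<lambda>p. Ms (r p) i j) \<longlonglongrightarrow> cnj (L j i)" by simp
    with Lt[of i j] show "adj L i j = L i j" unfolding adj_def using LIMSEQ_unique by metis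
  qed
  have kL: "Kmat K L" unfolding Kmat_def
  proof (intro allI)
    fix i j
    show "L i j \<in> K" by (rule Kmat_limit[OF K _ Lt]) (use Ms(3) in \<open>auto simp: Kmat_def\<close>)
  qed
  have qL: "qf L (X k) (X k) = complex_of_real (ac ph c0 k)" for k
  proof -
    have "(\<lambda>p. infsum (\<lambda>q. A p q * (X k (snd q) * cnj (X k (fst q)))) UNIV)
          \<longlonglongrightarrow> infsum (\<lambda>q. L (fst q) (snd q) * (X k (snd q) * cnj (X k (fst q)))) UNIV"
      by (rule weak_conv[OF As Ab Ac pair_l2[OF Xl]])
    hence t1: "(\<lambda>p. qf (Ms (r p)) (X k) (X k)) \<longlonglongrightarrow> qf L (X k) (X k)"
      unfolding qf_pairs A_def .
    have "(\<lambda>p. ac ph (cs p) k) \<longlonglongrightarrow> ac ph c0 k" using phfam.ac_cont[OF ph] a by blast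
    hence "(\<lambda>p. ac ph (cs (r p)) k) \<longlonglongrightarrow> ac ph c0 k"
      using LIMSEQ_subseq_LIMSEQ[OF _ r(1)] by (simp add: o_def)
    hence "(\<lambda>p. complex_of_real (ac ph (cs (r p)) k)) \<longlonglongrightarrow> complex_of_real (ac ph c0 k)"
      by (rule tendsto_of_real)
    hence t2: "(\<lambda>p. qf (Ms (r p)) (X k) (X k)) \<longlonglongrightarrow> complex_of_real (ac ph c0 k)"
      using Ms(5) by simp
    show ?thesis using LIMSEQ_unique[OF t1 t2] .
  qed
  show "c0 \<in> FF K X ph m" unfolding FF_def using hL aL kL nL qL by blast
qed

lemma FF_cover:
  assumes K: "scalar_field K" and XK: "\<And>k. X k \<in> l2 K" and ph: "phfam ph"
    and surj: "\<forall>a :: nat \<Rightarrow> real. summable (\<lambda>k. (a k)\<^sup>2) \<longrightarrow>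
               (\<exists>T. hilbert_schmidt K T \<and> (\<forall>k. l2_inner (T (X k)) (X k) = complex_of_real (a k)))"
  shows "\<exists>m. c \<in> FF K X ph m"
proof -
  have Xl: "l2s (X k)" for k using XK unfolding l2_mem by auto
  obtain T where T: "hilbert_schmidt K T" "\<And>k. l2_inner (T (X k)) (X k) = complex_of_real (ac ph c k)"
    using surj phfam.ac_l2[OF ph, of c] by blast
  define N where "N = mT T"
  have hN: "hsumm N" and kN: "Kmat K N" unfolding N_def using hs_mT[OF K T(1)] by auto
  have qN: "qf N (X k) (X k) = complex_of_real (ac ph c k)" for k
  proof -
    have "T (X k) = opM N (X k)" unfolding N_def by (rule hs_matrix_rep[OF K T(1) XK])
    thus ?thesis using T(2)[of k] inner_opM[OF hN Xl Xl] by simp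
  qed
  define H where "H = (\<lambda>i j. (1/2) * N i j + (1/2) * adj N i j)"
  have hA: "hsumm (adj N)" using hN hsumm_adj by blast
  have hH: "hsumm H" unfolding H_def by (rule lincomb(1)[OF hN hA])
  have aH: "adj H = H" unfolding H_def adj_def by (auto simp: fun_eq_iff)
  have kH: "Kmat K H" unfolding Kmat_def H_def adj_def
  proof (intro allI)
    fix i j
    have h: "(1/2::complex) = complex_of_real (1/2)" by simp
    have a1: "N i j \<in> K" "cnj (N j i) \<in> K" using kN K_ops(8)[OF K] unfolding Kmat_def by auto
    have "complex_of_real (1/2) * N i j + complex_of_real (1/2) * cnj (N j i) \<in> K"
      by (intro K_ops(4)[OF K] K_ops(6)[OF K] K_ops(3)[OF K] a1)
    thus "1/2 * N i j + 1/2 * cnj (N j i) \<in> K" by simp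
  qed
  have qH: "qf H (X k) (X k) = complex_of_real (ac ph c k)" for k
  proof -
    have "qf H (X k) (X k) = 1/2 * qf N (X k) (X k) + 1/2 * qf (adj N) (X k) (X k)"
      unfolding H_def by (rule lincomb(3)[OF hN hA Xl Xl])
    also have "qf (adj N) (X k) (X k) = cnj (qf N (X k) (X k))" using qf_adj[of N "X k" "X k"] by simp
    finally show ?thesis unfolding qN by simp
  qed
  have "hsn H \<le> real (nat (ceiling (hsn H)))" by linarith
  thus ?thesis unfolding FF_def using hH aH kH qH by blast
qed

theorem mainTheorem18:
  assumes "scalar_field K"
  shows "\<not> (\<exists>X. is_frame K X \<and> injective_family K X \<and>
            (\<forall>a :: nat \<Rightarrow> real. summable (\<lambda>k. (a k)\<^sup>2) \<longrightarrow>
               (\<exists>T. hilbert_schmidt K T \<and>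
                    (\<forall>k. l2_inner (T (X k)) (X k) = complex_of_real (a k)))))"
proof
  note K = assms
  assume "\<exists>X. is_frame K X \<and> injective_family K X \<and>
            (\<forall>a :: nat \<Rightarrow> real. summable (\<lambda>k. (a k)\<^sup>2) \<longrightarrow>
               (\<exists>T. hilbert_schmidt K T \<and>
                    (\<forall>k. l2_inner (T (X k)) (X k) = complex_of_real (a k))))"
  then obtain X where X: "is_frame K X \<and> injective_family K X \<and>
            (\<forall>a :: nat \<Rightarrow> real. summable (\<lambda>k. (a k)\<^sup>2) \<longrightarrow>
               (\<exists>T. hilbert_schmidt K T \<and>
                    (\<forall>k. l2_inner (T (X k)) (X k) = complex_of_real (a k))))" ..
  have isf: "is_frame K X" using X by (rule conjunct1)
  have inj: "injective_family K X" using X[THEN conjunct2] by (rule conjunct1)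
  have surj: "\<forall>a :: nat \<Rightarrow> real. summable (\<lambda>k. (a k)\<^sup>2) \<longrightarrow>
               (\<exists>T. hilbert_schmidt K T \<and> (\<forall>k. l2_inner (T (X k)) (X k) = complex_of_real (a k)))"
    using X[THEN conjunct2] by (rule conjunct2)
  have fd: "(\<forall>k. X k \<in> l2 K) \<and> (\<exists>A B. 0 < A \<and> 0 < B \<and>
        (\<forall>x\<in>l2 K. summable (\<lambda>k. (cmod (l2_inner x (X k)))\<^sup>2) \<and>
            A * (l2_norm x)\<^sup>2 \<le> (\<Sum>k. (cmod (l2_inner x (X k)))\<^sup>2) \<and>
            (\<Sum>k. (cmod (l2_inner x (X k)))\<^sup>2) \<le> B * (l2_norm x)\<^sup>2))"
    using isf unfolding is_frame_def .
  have XK: "\<And>k. X k \<in> l2 K" using fd by simp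
  obtain A B where AB: "0 < A \<and> 0 < B \<and>
        (\<forall>x\<in>l2 K. summable (\<lambda>k. (cmod (l2_inner x (X k)))\<^sup>2) \<and>
            A * (l2_norm x)\<^sup>2 \<le> (\<Sum>k. (cmod (l2_inner x (X k)))\<^sup>2) \<and>
            (\<Sum>k. (cmod (l2_inner x (X k)))\<^sup>2) \<le> B * (l2_norm x)\<^sup>2)"
    using fd[THEN conjunct2] by (elim exE) (rule that)
  have B: "B > 0" using AB by simp
  have fr: "summable (\<lambda>k. (cmod (l2_inner x (X k)))^2) \<and>
                  (\<Sum>k. (cmod (l2_inner x (X k)))^2) \<le> B * (l2_norm x)^2" if "x \<in> l2 K" for x
    using AB that by simp
  have Xl: "l2s (X k)" for k using XK unfolding l2_mem by auto
  have "\<forall>n. \<exists>p. fst p \<noteq> snd p \<and> (\<Sum>k. (phi X (fst p) (snd p) k)^2) \<le> (1/64)^n"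
  proof
    fix n :: nat
    have "(1/64::real)^n > 0" by simp
    from small_pair[OF fr XK B K this] show "\<exists>p. fst p \<noteq> snd p \<and> (\<Sum>k. (phi X (fst p) (snd p) k)^2) \<le> (1/64)^n"
      by auto
  qed
  from choice[OF this] obtain J where J: "\<And>n. fst (J n) \<noteq> snd (J n)"
    "\<And>n. (\<Sum>k. (phi X (fst (J n)) (snd (J n)) k)^2) \<le> (1/64)^n" by blast
  define ph where "ph n k = phi X (fst (J n)) (snd (J n)) k" for n k
  have ph: "phfam ph"
  proof
    fix n
    show "summable (\<lambda>k. (ph n k)^2)" unfolding ph_def by (rule phi_summable[OF fr XK B K J(1)])
    show "(\<Sum>k. (ph n k)^2) \<le> (1/64)^n" unfolding ph_def by (rule J(2))
  qed
  have cover: "\<exists>m. c \<in> FF K X ph m" for c by (rule FF_cover[OF K XK ph surj])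
  have clo: "closed (FF K X ph m)" for m by (rule FF_closed[OF K Xl ph])
  have "\<exists>m. interior (FF K X ph m) \<noteq> {}"
  proof (rule ccontr)
    assume "\<not> ?thesis"
    hence e: "interior (FF K X ph m) = {}" for m by blast
    have "euclidean interior_of \<Union>(range (FF K X ph)) = {}"
      by (rule Baire_category_alt) (use clo e in \<open>auto simp: completely_metrizable_space_euclidean closed_closedin[symmetric]\<close>)
    moreover have "\<Union>(range (FF K X ph)) = UNIV" using cover by blast
    ultimately show False by simp
  qed
  then obtain m c0 where "c0 \<in> interior (FF K X ph m)" by blast
  then obtain e where e: "e > 0" "ball c0 e \<subseteq> FF K X ph m"
    using open_contains_ball[of "interior (FF K X ph m)"] interior_subset by blast
  obtain N0 where N0: "(1/2::real)^N0 < e" using real_arch_pow_inv[OF e(1), of "1/2"] by auto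
  define n where "n = max m (Max (from_nat ` {..N0}) + 1)"
  have nfar: "from_nat p \<noteq> n" if "p \<le> N0" for p
  proof -
    have a: "(from_nat p :: nat) \<le> Max (from_nat ` {..N0})" using that by (intro Max_ge) auto
    have b: "Max ((from_nat :: nat \<Rightarrow> nat) ` {..N0}) + 1 \<le> n" unfolding n_def by (rule max.cobounded2)
    show ?thesis
    proof
      assume "from_nat p = n"
      with a b show False by simp
    qed
  qed
  have near: "c0(n := v) \<in> FF K X ph m" for v
  proof -
    have "{dist (c0 (from_nat p)) ((c0(n := v)) (from_nat p)) |p. p \<le> N0} = {0}"
      using nfar by auto
    hence "dist c0 (c0(n := v)) \<le> 2 * Max {0} + (1/2)^N0"
      using dist_fun_le_dist_first_terms[of c0 "c0(n := v)" N0] by simp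
    hence "dist c0 (c0(n := v)) < e" using N0 by simp
    thus ?thesis using e(2) by auto
  qed
  obtain Mp where Mp: "hsumm Mp" "adj Mp = Mp" "Kmat K Mp" "hsn Mp \<le> real m"
    "\<And>k. qf Mp (X k) (X k) = complex_of_real (ac ph (c0(n := 1)) k)"
    using near[of 1] unfolding FF_def by blast
  obtain Mm where Mm: "hsumm Mm" "adj Mm = Mm" "Kmat K Mm" "hsn Mm \<le> real m"
    "\<And>k. qf Mm (X k) (X k) = complex_of_real (ac ph (c0(n := -1)) k)"
    using near[of "-1"] unfolding FF_def by blast
  define M where "M = (\<lambda>i j. (1/2) * Mp i j + (-1/2) * Mm i j)"
  have hM: "hsumm M" unfolding M_def by (rule lincomb(1)[OF Mp(1) Mm(1)])
  have nM: "hsn M \<le> real m"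
  proof -
    have "hsn M \<le> 2 * (cmod (1/2))^2 * hsn Mp + 2 * (cmod (-1/2))^2 * hsn Mm"
      unfolding M_def by (rule lincomb(2)[OF Mp(1) Mm(1)])
    also have "\<dots> = hsn Mp / 2 + hsn Mm / 2" by (simp add: power2_eq_square)
    also have "\<dots> \<le> real m" using Mp(4) Mm(4) by simp
    finally show ?thesis .
  qed
  have pt: "cnj (Q j i) = Q i j" if "adj Q = Q" for Q :: "nat \<Rightarrow> nat \<Rightarrow> complex" and i j
    using fun_cong[OF fun_cong[OF that], of i j] unfolding adj_def by simp
  have aM: "adj M = M" unfolding M_def adj_def
    using pt[OF Mp(2)] pt[OF Mm(2)] by (auto simp: fun_eq_iff)
  have half: "(1/2::complex) = complex_of_real (1/2)" "(-1/2::complex) = complex_of_real (-1/2)" by simp_all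
  have kM: "Kmat K M" unfolding Kmat_def M_def half
  proof (intro allI)
    fix i j
    have "Mp i j \<in> K" "Mm i j \<in> K" using Mp(3) Mm(3) unfolding Kmat_def by auto
    thus "complex_of_real (1/2) * Mp i j + complex_of_real (-1/2) * Mm i j \<in> K"
      by (intro K_ops(4)[OF K] K_ops(6)[OF K] K_ops(3)[OF K])
  qed
  have qM: "qf M (X k) (X k) = complex_of_real (2^n * ph n k)" for k
  proof -
    have "qf M (X k) (X k) = 1/2 * qf Mp (X k) (X k) + (-1/2) * qf Mm (X k) (X k)"
      unfolding M_def by (rule lincomb(3)[OF Mp(1) Mm(1) Xl Xl])
    also have "\<dots> = complex_of_real ((ac ph (c0(n := 1)) k - ac ph (c0(n := -1)) k) / 2)"
      unfolding Mp(5) Mm(5) by (simp add: field_simps)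
    also have "\<dots> = complex_of_real (2^n * ph n k)"
      unfolding phfam.ac_diff[OF ph] by simp
    finally show ?thesis .
  qed
  define j where "j = fst (J n)"
  define l where "l = snd (J n)"
  have jl: "j \<noteq> l" unfolding j_def l_def by (rule J(1))
  define E where "E = Em j l"
  have hE: "hsumm E" unfolding E_def using Em_props(1)[OF jl, of 1] by simp
  have aE: "adj E = E" unfolding E_def using Em_props(3)[OF jl, of 1] by simp
  have kE: "Kmat K E" unfolding E_def using Kmat_Em[OF K, of 1 j l] K_ops[OF K] by simp
  have qE: "qf E (X k) (X k) = complex_of_real (ph n k)" for k
    using qf_real[OF aE, of "X k"] unfolding ph_def phi_def E_def j_def l_def by simp
  define D where "D = (\<lambda>i j'. 1 * M i j' + (- complex_of_real (2^n)) * E i j')"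
  have hD: "hsumm D" unfolding D_def by (rule lincomb(1)[OF hM hE])
  have aD: "adj D = D" unfolding D_def adj_def
    using pt[OF aM] pt[OF aE] by (auto simp: fun_eq_iff)
  have kD: "Kmat K D" unfolding Kmat_def D_def
  proof (intro allI)
    fix i j'
    have "M i j' \<in> K" "E i j' \<in> K" using kM kE unfolding Kmat_def by auto
    thus "1 * M i j' + (- complex_of_real (2^n)) * E i j' \<in> K"
      by (intro K_ops(4)[OF K] K_ops(6)[OF K] K_ops(3)[OF K] K_ops(2)[OF K] K_ops(7)[OF K])
  qed
  have qD: "l2_inner (opM D (X k)) (X k) = 0" for k
  proof -
    have "l2_inner (opM D (X k)) (X k) = qf D (X k) (X k)" by (rule inner_opM[OF hD Xl Xl])
    also have "\<dots> = 1 * qf M (X k) (X k) + (- complex_of_real (2^n)) * qf E (X k) (X k)"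
      unfolding D_def by (rule lincomb(3)[OF hM hE Xl Xl])
    also have "\<dots> = 0" unfolding qM qE by simp
    finally show ?thesis .
  qed
  have "\<forall>x\<in>l2 K. opM D x = (\<lambda>n. 0)"
    using inj hs_opM[OF K hD kD] sa_opM[OF hD aD] qD unfolding injective_family_def by blast
  hence D0: "D i j' = 0" for i j'
    using unit_vec_props(3)[OF K, of j'] opM_unit_vec[of D j'] by (metis fun_cong)
  have MeqE: "M = (\<lambda>a b. complex_of_real (2^n) * Em j l a b)"
    using D0 unfolding D_def E_def by (auto simp: fun_eq_iff)
  have "hsn M = 2 * (2^n)^2"
    unfolding MeqE Em_props(2)[OF jl] by (simp add: norm_power)
  hence "2 * (2^n)^2 \<le> real m" using nM by simp
  moreover have "real m \<le> real n" unfolding n_def by simp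
  moreover have "real n < 2^n" by simp
  moreover have "(2::real)^n \<le> 2 * (2^n)^2"
  proof -
    have h1: "(1::real) \<le> 2^n" by simp
    show ?thesis apply (simp add: power2_eq_square) using h1 by linarith
  qed
  ultimately show False by linarith
qed

end
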